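(* Let $q\ge 2$ be an integer and $s\in(0,2)$, and let $P(x,t)=|\Psi(x,t)|^2$ be the probability density of the Weierstrass-like wave function $\Psi$ defined in the context. Then for every fixed $t\in\mathbb R$ the graph of $x\mapsto P(x,t)$ on $[0,\pi]$ has box-counting dimension $D_x=\max\{s,1\}$. In particular this dimension is the same at $t=0$ and at every later time.
   Context: For an integer $q\ge2$ and $s\in(0,2)$ define, for $x\in[0,\pi]$ and $t\in\mathbb R$, $$\Psi(x,t)=N\sum_{n=0}^{\infty} q^{n(s-2)}\sin(q^n x)\,e^{-i q^{2n} t},\qquad N=\sqrt{\tfrac{2}{\pi}\big(1-q^{2(s-2)}\big)},$$ a uniformly convergent series. Let $P(x,t)=|\Psi(x,t)|^2$. For a bounded set $A\subset\mathbb R^d$ let $N(\delta)$ be the number of cubes $[m_1\delta,(m_1+1)\delta]\times\dots\times[m_d\delta,(m_d+1)\delta]$, $m_i\in\mathbb Z$, meeting $A$. The upper and lower box-counting dimensions are $\limsup_{\delta\to0}$ and $\liminf_{\delta\to0}$ of $\ln N(\delta)/\ln(1/\delta)$. The box-counting dimension $\dim_B A$ exists when these two coincide, and is then their common value. The graph of a function $f$ on a set $U$ is $\{(u,f(u)):u\in U\}$. *)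

theory Defs
  imports "HOL-Analysis.Analysis"
begin

definition wnorm :: "nat \<Rightarrow> real \<Rightarrow> real" where
  "wnorm q s = sqrt (2 / pi * (1 - real q powr (2 * (s - 2))))"

definition Psi :: "nat \<Rightarrow> real \<Rightarrow> real \<Rightarrow> real \<Rightarrow> complex" where
  "Psi q s x t = complex_of_real (wnorm q s) *
     (\<Sum>n. complex_of_real (real q powr (real n * (s - 2)) * sin (real q ^ n * x))
           * exp (- \<i> * complex_of_real (real q ^ (2 * n) * t)))"

definition Pdens :: "nat \<Rightarrow> real \<Rightarrow> real \<Rightarrow> real \<Rightarrow> real" where
  "Pdens q s x t = (cmod (Psi q s x t))\<^sup>2"

definition grid_count :: "(real \<times> real) set \<Rightarrow> real \<Rightarrow> nat" where
  "grid_count A \<delta> = card {m :: int \<times> int. \<exists>p \<in> A.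
      of_int (fst m) * \<delta> \<le> fst p \<and> fst p \<le> (of_int (fst m) + 1) * \<delta> \<and>
      of_int (snd m) * \<delta> \<le> snd p \<and> snd p \<le> (of_int (snd m) + 1) * \<delta>}"

definition upper_box_dim :: "(real \<times> real) set \<Rightarrow> ereal" where
  "upper_box_dim A = Limsup (at_right 0)
     (\<lambda>\<delta>. ereal (ln (real (grid_count A \<delta>)) / ln (1 / \<delta>)))"

definition lower_box_dim :: "(real \<times> real) set \<Rightarrow> ereal" where
  "lower_box_dim A = Liminf (at_right 0)
     (\<lambda>\<delta>. ereal (ln (real (grid_count A \<delta>)) / ln (1 / \<delta>)))"

definition has_box_dim :: "(real \<times> real) set \<Rightarrow> real \<Rightarrow> bool" where
  "has_box_dim A D \<longleftrightarrow> lower_box_dim A = upper_box_dim A \<and> upper_box_dim A = ereal D"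

definition graph_on :: "real set \<Rightarrow> (real \<Rightarrow> real) \<Rightarrow> (real \<times> real) set" where
  "graph_on U f = {(u, f u) | u. u \<in> U}"

end

theory Submission
  imports Defs
begin


lemma tbt:
  fixes f :: "nat \<Rightarrow> real \<Rightarrow> 'c::euclidean_space"
  assumes c: "\<And>n. continuous_on {a..b} (f n)"
    and bnd: "\<And>n x. x \<in> {a..b} \<Longrightarrow> norm (f n x) \<le> B n"
    and sB: "summable B"
  shows "((\<lambda>x. \<Sum>n. f n x) has_integral (\<Sum>n. integral {a..b} (f n))) {a..b}"
proof -
  have u: "uniform_limit (cbox a b) (\<lambda>n x. \<Sum>i<n. f i x) (\<lambda>x. \<Sum>i. f i x) sequentially"
    using Weierstrass_m_test[OF _ sB, of "cbox a b" f] bnd by auto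
  have cc: "\<And>n. continuous_on (cbox a b) (\<lambda>x. \<Sum>i<n. f i x)"
    using c by (auto intro!: continuous_intros)
  obtain I J where I: "\<And>n. ((\<lambda>x. \<Sum>i<n. f i x) has_integral I n) (cbox a b)"
    and J: "((\<lambda>x. \<Sum>i. f i x) has_integral J) (cbox a b)" and IJ: "I \<longlonglongrightarrow> J"
    using uniform_limit_integral_cbox[OF u cc] by auto
  have fi: "\<And>i. f i integrable_on {a..b}" using c integrable_continuous_real by blast
  have Ieq: "I n = (\<Sum>i<n. integral {a..b} (f i))" for n
  proof -
    have "((\<lambda>x. \<Sum>i<n. f i x) has_integral (\<Sum>i<n. integral {a..b} (f i))) {a..b}"
      using fi by (intro has_integral_sum) auto
    then show ?thesis using I[of n] by (simp add: has_integral_unique)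
  qed
  have "I = (\<lambda>n. \<Sum>i<n. integral {a..b} (f i))" using Ieq by auto
  then have "(\<lambda>n. \<Sum>i<n. integral {a..b} (f i)) \<longlonglongrightarrow> J" using IJ by simp
  then have "(\<lambda>i. integral {a..b} (f i)) sums J" by (simp add: sums_def)
  then show ?thesis using J by (simp add: sums_iff)
qed


lemma sin_lip: "\<bar>sin (w::real) - sin z\<bar> \<le> \<bar>w - z\<bar>"
proof -
  have "\<bar>sin w - sin z\<bar> = 2 * \<bar>sin ((w - z) / 2)\<bar> * \<bar>cos ((w + z) / 2)\<bar>"
    by (simp add: sin_diff_sin abs_mult)
  also have "\<dots> \<le> 2 * \<bar>(w - z) / 2\<bar> * 1"
    by (intro mult_mono abs_sin_x_le_abs_x) auto
  finally show ?thesis by simp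
qed

lemma sin_hoelder:
  fixes w z a :: real
  assumes "0 < a" "a \<le> 1"
  shows "\<bar>sin w - sin z\<bar> \<le> 2 powr (1 - a) * \<bar>w - z\<bar> powr a"
proof (cases "\<bar>w - z\<bar> \<le> 2")
  case True
  show ?thesis
  proof (cases "w = z")
    case True then show ?thesis by simp
  next
    case False
    then have pos: "\<bar>w - z\<bar> > 0" by simp
    have "\<bar>w - z\<bar> = \<bar>w - z\<bar> powr (1 - a) * \<bar>w - z\<bar> powr a"
      using pos by (simp add: powr_add[symmetric])
    also have "\<dots> \<le> 2 powr (1 - a) * \<bar>w - z\<bar> powr a"
      using True assms pos by (intro mult_right_mono powr_mono2) auto
    finally show ?thesis using sin_lip[of w z] by linarith
  qed
next
  case False
  have "\<bar>sin w - sin z\<bar> \<le> 2"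
    using abs_sin_le_one[of w] abs_sin_le_one[of z] by linarith
  also have "2 = 2 powr (1 - a) * 2 powr a" by (simp add: powr_add[symmetric])
  also have "\<dots> \<le> 2 powr (1 - a) * \<bar>w - z\<bar> powr a"
    using False assms by (intro mult_left_mono powr_mono2) auto
  finally show ?thesis .
qed

locale WS =
  fixes q :: nat and s t :: real
  assumes q2: "q \<ge> 2" and s0: "0 < s" and s2: "s < 2"
begin

definition rr :: real where "rr = real q powr (s - 2)"
definition amp :: "nat \<Rightarrow> real" where "amp n = real q powr (real n * (s - 2))"
definition ph :: "nat \<Rightarrow> real" where "ph n = real q ^ (2 * n) * t"
definition bco :: "nat \<Rightarrow> complex" where
  "bco n = of_real (amp n) * exp (- \<i> * of_real (ph n))"
definition Ss :: "real \<Rightarrow> complex" where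
  "Ss x = (\<Sum>n. bco n * of_real (sin (real q ^ n * x)))"
definition NN :: real where "NN = wnorm q s"
definition AA :: real where "AA = (\<Sum>n. amp n)"

lemma qpos: "real q > 1" using q2 by simp

lemma rr_bounds: "0 < rr" "rr < 1"
  using qpos s2 by (auto simp: rr_def intro!: powr_less_one)

lemma amp_eq: "amp n = rr ^ n"
  using qpos by (simp add: amp_def rr_def powr_power mult.commute q2)

lemma amp_pos: "amp n > 0" using q2 by (simp add: amp_def)

lemma summable_amp: "summable amp"
  unfolding amp_eq[abs_def] using rr_bounds by (intro summable_geometric) simp

lemma norm_bco: "norm (bco n) = amp n"
proof -
  have "norm (exp (- \<i> * of_real (ph n))) = 1"
    by (simp add: norm_exp_eq_Re)
  then show ?thesis using amp_pos[of n] by (simp add: bco_def norm_mult)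
qed

lemma term_bound: "norm (bco n * of_real (sin (real q ^ n * x))) \<le> amp n"
proof -
  have "norm (bco n * of_real (sin (real q ^ n * x))) = amp n * \<bar>sin (real q ^ n * x)\<bar>"
    by (simp add: norm_mult norm_bco)
  also have "\<dots> \<le> amp n * 1" using amp_pos[of n] by (intro mult_left_mono) auto
  finally show ?thesis by simp
qed

lemma summable_Ss: "summable (\<lambda>n. bco n * of_real (sin (real q ^ n * x)))"
  by (rule summable_norm_cancel, rule summable_comparison_test[OF _ summable_amp])
     (auto intro!: exI[of _ 0] simp: term_bound)

lemma Ss_bound: "norm (Ss x) \<le> AA"
  unfolding Ss_def AA_def by (rule norm_suminf_le[OF term_bound summable_amp])

lemma AA_pos: "AA > 0"
proof -
  have "amp 0 \<le> AA" unfolding AA_def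
    using summable_amp amp_pos sum_le_suminf[OF summable_amp, of "{0}"] by (auto intro: less_imp_le)
  then show ?thesis using amp_pos[of 0] by simp
qed

lemma Psi_eq: "Psi q s x t = of_real NN * Ss x"
  unfolding Psi_def Ss_def NN_def bco_def amp_def ph_def
  by (simp add: mult_ac)

lemma Pdens_eq: "Pdens q s x t = NN^2 * (norm (Ss x))^2"
  by (simp add: Pdens_def Psi_eq norm_mult power_mult_distrib)

end


lemma hoelder_continuous:
  fixes f :: "real \<Rightarrow> 'b::real_normed_vector"
  assumes "\<And>x y. norm (f x - f y) \<le> C * \<bar>x - y\<bar> powr a" "0 < a"
  shows "continuous_on S f"
proof -
  have "isCont f x" for x
  proof -
    have "((\<lambda>y. C * \<bar>y - x\<bar> powr a) \<longlongrightarrow> C * \<bar>x - x\<bar> powr a) (at x)"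
      using assms(2) by (intro tendsto_intros) auto
    then have lim0: "((\<lambda>y. C * \<bar>y - x\<bar> powr a) \<longlongrightarrow> 0) (at x)" using assms(2) by simp
    have "((\<lambda>y. f y - f x) \<longlongrightarrow> 0) (at x)"
      by (rule Lim_null_comparison[OF _ lim0]) (use assms(1) in auto)
    then show ?thesis unfolding isCont_def by (simp add: LIM_zero_iff)
  qed
  then show ?thesis by (simp add: continuous_at_imp_continuous_on)
qed

context WS begin

definition HC :: "real \<Rightarrow> real" where
  "HC a = 2 powr (1 - a) * (\<Sum>n. (real q powr (s - 2 + a)) ^ n)"

lemma Ss_hoelder:
  assumes a: "0 < a" "a \<le> 1" "a < 2 - s"
  shows "norm (Ss x - Ss y) \<le> HC a * \<bar>x - y\<bar> powr a"
proof -
  define g where "g n = 2 powr (1 - a) * \<bar>x - y\<bar> powr a * (real q powr (s - 2 + a)) ^ n" for n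
  have gr: "real q powr (s - 2 + a) < 1" using qpos a by (intro powr_less_one) auto
  have sg: "summable g" unfolding g_def
    using gr by (intro summable_mult summable_geometric) auto
  have "Ss x - Ss y = (\<Sum>n. bco n * of_real (sin (real q ^ n * x)) - bco n * of_real (sin (real q ^ n * y)))"
    unfolding Ss_def using suminf_diff[OF summable_Ss[of x] summable_Ss[of y]] by simp
  also have "norm \<dots> \<le> suminf g"
  proof (rule norm_suminf_le[OF _ sg])
    fix n
    have "norm (bco n * of_real (sin (real q ^ n * x)) - bco n * of_real (sin (real q ^ n * y)))
        = amp n * \<bar>sin (real q ^ n * x) - sin (real q ^ n * y)\<bar>"
      by (simp add: norm_bco norm_mult flip: right_diff_distrib of_real_diff)
    also have "\<dots> \<le> amp n * (2 powr (1 - a) * \<bar>real q ^ n * x - real q ^ n * y\<bar> powr a)"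
      using amp_pos[of n] by (intro mult_left_mono sin_hoelder a) auto
    also have "\<bar>real q ^ n * x - real q ^ n * y\<bar> = real q ^ n * \<bar>x - y\<bar>"
      by (simp add: abs_mult flip: right_diff_distrib)
    also have "(real q ^ n * \<bar>x - y\<bar>) powr a = (real q ^ n) powr a * \<bar>x - y\<bar> powr a"
      by (simp add: powr_mult)
    also have "(real q ^ n) powr a = real q powr (real n * a)"
      using qpos by (simp add: powr_realpow[symmetric] powr_powr)
    also have "amp n * (2 powr (1 - a) * (real q powr (real n * a) * \<bar>x - y\<bar> powr a)) = g n"
    proof -
      have "amp n * real q powr (real n * a) = (real q powr (s - 2 + a)) ^ n"
        using qpos by (simp add: amp_def powr_power powr_add[symmetric] algebra_simps)
      then show ?thesis unfolding g_def by (simp add: algebra_simps)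
    qed
    finally show "norm (bco n * of_real (sin (real q ^ n * x)) - bco n * of_real (sin (real q ^ n * y))) \<le> g n" .
  qed
  also have "suminf g = HC a * \<bar>x - y\<bar> powr a"
    unfolding g_def HC_def using gr
    by (subst suminf_mult) (auto intro: summable_geometric simp: algebra_simps)
  finally show ?thesis .
qed

lemma HC_nonneg: assumes "0 < a" "a < 2 - s" shows "HC a \<ge> 0"
proof -
  have gr: "real q powr (s - 2 + a) < 1" using qpos assms by (intro powr_less_one) auto
  have "0 \<le> (\<Sum>n. (real q powr (s - 2 + a)) ^ n)"
    using gr by (intro suminf_nonneg summable_geometric) auto
  then show ?thesis unfolding HC_def by simp
qed

lemma P_hoelder:
  assumes a: "0 < a" "a \<le> 1" "a < 2 - s"
  shows "\<bar>Pdens q s x t - Pdens q s y t\<bar> \<le> (NN^2 * 2 * AA * HC a) * \<bar>x - y\<bar> powr a"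
proof -
  have e1: "\<bar>Pdens q s x t - Pdens q s y t\<bar> = NN^2 * \<bar>(norm (Ss x))^2 - (norm (Ss y))^2\<bar>"
    by (simp add: Pdens_eq abs_mult flip: right_diff_distrib)
  have e2: "\<bar>(norm (Ss x))^2 - (norm (Ss y))^2\<bar> = (norm (Ss x) + norm (Ss y)) * \<bar>norm (Ss x) - norm (Ss y)\<bar>"
  proof -
    have "(norm (Ss x))^2 - (norm (Ss y))^2 = (norm (Ss x) + norm (Ss y)) * (norm (Ss x) - norm (Ss y))"
      by (simp add: power2_eq_square algebra_simps)
    then show ?thesis by (simp add: abs_mult)
  qed
  have e3: "(norm (Ss x) + norm (Ss y)) * \<bar>norm (Ss x) - norm (Ss y)\<bar> \<le> (2 * AA) * norm (Ss x - Ss y)"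
    using Ss_bound[of x] Ss_bound[of y] norm_triangle_ineq3[of "Ss x" "Ss y"] AA_pos
    by (intro mult_mono) auto
  have e4: "(2 * AA) * norm (Ss x - Ss y) \<le> (2 * AA) * (HC a * \<bar>x - y\<bar> powr a)"
    using AA_pos by (intro mult_left_mono Ss_hoelder a) auto
  have "\<bar>Pdens q s x t - Pdens q s y t\<bar> \<le> NN^2 * ((2 * AA) * (HC a * \<bar>x - y\<bar> powr a))"
    unfolding e1 e2 using e3 e4 by (intro mult_left_mono) auto
  then show ?thesis by (simp add: algebra_simps)
qed

definition a0 :: real where "a0 = (2 - s) / 2"
lemma a0: "0 < a0" "a0 \<le> 1" "a0 < 2 - s" using s0 s2 by (auto simp: a0_def)

lemma Ss_cont: "continuous_on S Ss"
  by (rule hoelder_continuous[OF Ss_hoelder[OF a0]]) (use a0 in auto)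

lemma P_cont: "continuous_on S (\<lambda>x. Pdens q s x t)"
  by (rule hoelder_continuous[OF _ a0(1)]) (use P_hoelder[OF a0] in auto)

lemma P_bound: "\<bar>Pdens q s x t\<bar> \<le> NN^2 * AA^2"
  using Ss_bound[of x] by (simp add: Pdens_eq, intro mult_left_mono power_mono) auto

end


lemma cos_int_integral:
  "((\<lambda>x. cos (real_of_int j * x)) has_integral (if j = 0 then pi else 0)) {0..pi}"
proof (cases "j = 0")
  case True
  then show ?thesis using has_integral_const_real[of "1::real" 0 pi] by simp
next
  case False
  have d: "((\<lambda>x. sin (real_of_int j * x) / real_of_int j) has_vector_derivative cos (real_of_int j * x)) (at x within {0..pi})" for x
    using False
    by (auto intro!: derivative_eq_intros simp: has_real_derivative_iff_has_vector_derivative[symmetric])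
  have "((\<lambda>x. cos (real_of_int j * x)) has_integral
      (sin (real_of_int j * pi) / real_of_int j - sin (real_of_int j * 0) / real_of_int j)) {0..pi}"
    by (rule fundamental_theorem_of_calculus) (use d in auto)
  moreover have "sin (real_of_int j * pi) = 0" by (simp add: sin_zero_iff_int2)
  ultimately show ?thesis using False by simp
qed

lemma prod_trig0:
  fixes A B K :: real
  shows "sin A * sin B * cos K = (cos (A - B - K) + cos (A - B + K) - cos (A + B - K) - cos (A + B + K)) / 4"
proof -
  have "cos (A - B - K) = cos (A - B) * cos K + sin (A - B) * sin K" by (rule cos_diff)
  moreover have "cos (A - B + K) = cos (A - B) * cos K - sin (A - B) * sin K" by (rule cos_add)
  moreover have "cos (A + B - K) = cos (A + B) * cos K + sin (A + B) * sin K" by (rule cos_diff)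
  moreover have "cos (A + B + K) = cos (A + B) * cos K - sin (A + B) * sin K" by (rule cos_add)
  moreover have "cos (A - B) = cos A * cos B + sin A * sin B" by (rule cos_diff)
  moreover have "cos (A + B) = cos A * cos B - sin A * sin B" by (rule cos_add)
  ultimately show ?thesis by (simp add: algebra_simps)
qed

lemma prod_trig: fixes a b k x :: real shows "sin (a * x) * sin (b * x) * cos (k * x) =
  (cos ((a - b - k) * x) + cos ((a - b + k) * x) - cos ((a + b - k) * x) - cos ((a + b + k) * x)) / 4"
proof -
  have e1: "(a - b - k) * x = (a*x) - (b*x) - (k*x)" "(a - b + k) * x = (a*x) - (b*x) + (k*x)"
    "(a + b - k) * x = (a*x) + (b*x) - (k*x)" "(a + b + k) * x = (a*x) + (b*x) + (k*x)"
    by (simp_all add: algebra_simps)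
  show ?thesis unfolding e1 by (rule prod_trig0)
qed

definition dl :: "int \<Rightarrow> real" where "dl j = (if j = 0 then 1 else 0)"

lemma trig3_integral:
  fixes a b k :: int
  shows "((\<lambda>x. sin (a * x) * sin (b * x) * cos (k * x)) has_integral
     pi / 4 * (dl (a - b - k) + dl (a - b + k) - dl (a + b - k) - dl (a + b + k))) {0..pi}"
proof -
  have h: "\<And>j. ((\<lambda>x. cos (real_of_int j * x)) has_integral pi * dl j) {0..pi}"
    apply -
    subgoal for j by (cases "j = 0") (use cos_int_integral[of j] in \<open>auto simp: dl_def\<close>)
    done
  have "((\<lambda>x. (cos (real_of_int (a - b - k) * x) + cos (real_of_int (a - b + k) * x)
        - cos (real_of_int (a + b - k) * x) - cos (real_of_int (a + b + k) * x)) / 4) has_integral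
      (pi * dl (a - b - k) + pi * dl (a - b + k) - pi * dl (a + b - k) - pi * dl (a + b + k)) / 4) {0..pi}"
    by (intro has_integral_divide has_integral_diff has_integral_add h)
  moreover have "(\<lambda>x::real. sin (a * x) * sin (b * x) * cos (k * x)) = (\<lambda>x::real. (cos (real_of_int (a - b - k) * x) + cos (real_of_int (a - b + k) * x)
        - cos (real_of_int (a + b - k) * x) - cos (real_of_int (a + b + k) * x)) / 4)"
    by (rule ext, simp only: prod_trig of_int_diff of_int_add)
  moreover have "(pi * dl (a - b - k) + pi * dl (a - b + k) - pi * dl (a + b - k) - pi * dl (a + b + k)) / 4
     = pi / 4 * (dl (a - b - k) + dl (a - b + k) - dl (a + b - k) - dl (a + b + k))"
    by (simp add: field_simps)
  ultimately show ?thesis by simp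
qed


lemma qdvd: "(a::nat) \<ge> 1 \<Longrightarrow> q dvd q^a" by (cases a) (auto simp: dvd_def)

lemma dv1: "(q::nat) dvd x \<Longrightarrow> q dvd Suc x \<Longrightarrow> q = 1"
  by (metis dvd_add_right_iff Suc_eq_plus1 nat_dvd_1_iff_1)

lemma nt1:
  fixes q :: nat assumes q: "q \<ge> 2" and M: "M \<ge> 1"
    and e: "q^n + q^m = q^M + 1"
  shows "(n = 0 \<and> m = M) \<or> (n = M \<and> m = 0)"
proof -
  have inj: "\<And>a b. q^a = q^b \<Longrightarrow> a = b" using q by (simp add: power_inject_exp)
  show ?thesis
  proof (cases "n = 0")
    case True then show ?thesis using e inj by auto
  next
    case n: False
    show ?thesis
    proof (cases "m = 0")
      case True then show ?thesis using e inj by auto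
    next
      case False
      have a: "q dvd q^n + q^m" using n False qdvd by simp
      have b: "q dvd q^M" using M qdvd by simp
      from a have "q dvd q^M + 1" using e by simp
      with b have "q dvd 1" using dv1 q by simp
      then show ?thesis using q by simp
    qed
  qed
qed

lemma nt2:
  fixes q :: nat assumes q: "q \<ge> 2" and M: "M \<ge> 2"
    and e: "q^n + q^m = q^M + q"
  shows "(n = 1 \<and> m = M) \<or> (n = M \<and> m = 1)"
proof -
  have qM: "q dvd q^M + q" using M qdvd[of M q] by simp
  have big: "q^M + q > 2" using M q
    by (metis add_strict_increasing le_trans less_le_trans nat_less_le one_le_numeral one_le_power power_increasing numeral_le_iff semiring_norm(69) less_2_cases_iff power_one_right one_add_one)
  show ?thesis
  proof (cases "n = 0")
    case n0: True
    show ?thesis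
    proof (cases "m = 0")
      case True then show ?thesis using e n0 big by simp
    next
      case False
      have "q dvd q^m" using False qdvd by simp
      moreover have "q dvd q^m + 1" using e n0 qM by (simp add: add.commute)
      ultimately have "q dvd 1" using dv1 q by simp
      then show ?thesis using q by simp
    qed
  next
    case n: False
    show ?thesis
    proof (cases "m = 0")
      case True
      have "q dvd q^n" using n qdvd by simp
      moreover have "q dvd q^n + 1" using e True qM by simp
      ultimately have "q dvd 1" using dv1 q by simp
      then show ?thesis using q by simp
    next
      case False
      obtain n' where n': "n = Suc n'" using n not0_implies_Suc by blast
      obtain m' where m': "m = Suc m'" using False not0_implies_Suc by blast
      obtain M' where M': "M = Suc M'" "M' \<ge> 1" using M by (cases M) auto
      have "q * (q^n' + q^m') = q * (q^M' + 1)" using e n' m' M' by (simp add: algebra_simps)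
      then have "q^n' + q^m' = q^M' + 1" using q by (metis mult_left_cancel not_numeral_le_zero)
      from nt1[OF q M'(2) this] show ?thesis using n' m' M' by auto
    qed
  qed
qed

lemma nt3:
  fixes q :: nat assumes q: "q \<ge> 2" and M: "M \<ge> 2"
    and e: "q^n = q^m + q^M + 1"
  shows False
proof -
  have n: "n \<ge> 1" using e q by (cases n) auto
  have qn: "q dvd q^n" using n qdvd by simp
  have qM: "q dvd q^M" using M qdvd by simp
  show False
  proof (cases "m = 0")
    case False
    have "q dvd q^m + q^M" using qdvd False qM by simp
    moreover have "q dvd (q^m + q^M) + 1" using e qn by simp
    ultimately have "q dvd 1" using dv1 q by simp
    then show False using q by simp
  next
    case True
    then have e2: "q^n = q^M + 2" using e by simp
    have "q dvd q^M + 2" using qn e2 by simp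
    then have "q dvd 2" using qM by (metis dvd_add_right_iff)
    then have "q \<le> 2" by (simp add: dvd_imp_le)
    then have q2: "q = 2" using q by simp
    have p4: "\<And>a. a \<ge> 2 \<Longrightarrow> (4::nat) dvd 2^a"
    proof -
      fix a :: nat assume "a \<ge> 2"
      then have "(2::nat)^2 dvd 2^a" by (rule le_imp_power_dvd)
      then show "(4::nat) dvd 2^a" by simp
    qed
    have "n \<ge> 2"
    proof (rule ccontr)
      assume "\<not> n \<ge> 2" then have "n = 1" using n by simp
      then show False using e2 q2 by simp
    qed
    then have "(4::nat) dvd 2^n" using p4 by simp
    then have "(4::nat) dvd 2^M + 2" using e2 q2 by simp
    then have "(4::nat) dvd 2" using p4[OF M] by (metis dvd_add_right_iff)
    then show False by simp
  qed
qed

lemma nt4: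
  fixes q :: nat assumes q: "q \<ge> 2" and M: "M \<ge> 3"
    and e: "q^n = q^m + q^M + q"
  shows False
proof -
  have n: "n \<ge> 1" using e q by (cases n) auto
  have qn: "q dvd q^n" using n qdvd by simp
  have qM: "q dvd q^M + q" using M qdvd[of M q] by simp
  show False
  proof (cases "m = 0")
    case True
    have "q dvd (q^M + q) + 1" using e qn True by (simp add: add.assoc add.commute)
    then have "q dvd 1" using qM dvd_add_right_iff by blast
    then show False using q by simp
  next
    case False
    obtain n' where n': "n = Suc n'" using n by (cases n) auto
    obtain m' where m': "m = Suc m'" using False not0_implies_Suc by blast
    obtain M' where M': "M = Suc M'" "M' \<ge> 2" using M by (cases M) auto
    have "q * q^n' = q * (q^m' + q^M' + 1)" using e n' m' M' by (simp add: algebra_simps)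
    then have "q^n' = q^m' + q^M' + 1" using q by (metis mult_left_cancel not_numeral_le_zero)
    then show False using nt3[OF q M'(2)] by simp
  qed
qed


context WS begin

lemma sum_iff:
  assumes M: "M \<ge> 3" and j: "j \<le> 1"
  shows "(q^n + q^m = q^M + q^j) \<longleftrightarrow> ((n = j \<and> m = M) \<or> (n = M \<and> m = j))"
proof
  assume e: "q^n + q^m = q^M + q^j"
  show "(n = j \<and> m = M) \<or> (n = M \<and> m = j)"
  proof (cases "j = 0")
    case True then show ?thesis using nt1[OF q2, of M n m] e M by auto
  next
    case False then have "j = 1" using j by simp
    then show ?thesis using nt2[OF q2, of M n m] e M by auto
  qed
qed auto

lemma diff_never:
  assumes M: "M \<ge> 3" and j: "j \<le> 1"
  shows "q^n \<noteq> q^m + (q^M + q^j)"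
proof
  assume e: "q^n = q^m + (q^M + q^j)"
  show False
  proof (cases "j = 0")
    case True then show ?thesis using nt3[OF q2, of M n m] e M by (simp add: add.assoc)
  next
    case False then have "j = 1" using j by simp
    then show ?thesis using nt4[OF q2, of M n m] e M by (simp add: add.assoc)
  qed
qed

lemma ssc_integral:
  assumes M: "M \<ge> 3" and j: "j \<le> 1"
  shows "((\<lambda>x. sin (real q ^ n * x) * sin (real q ^ m * x) * cos (real (q^M + q^j) * x)) has_integral
     (if (n = j \<and> m = M) \<or> (n = M \<and> m = j) then - pi / 4 else 0)) {0..pi}"
proof -
  define a b k where "a = int (q^n)" "b = int (q^m)" "k = int (q^M + q^j)"
  have I: "((\<lambda>x. sin (a * x) * sin (b * x) * cos (k * x)) has_integral
     pi / 4 * (dl (a - b - k) + dl (a - b + k) - dl (a + b - k) - dl (a + b + k))) {0..pi}"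
    by (rule trig3_integral)
  have c1: "a = b + k \<longleftrightarrow> q^n = q^m + (q^M + q^j)" unfolding a_b_k_def by (metis of_nat_add of_nat_eq_iff)
  have c2: "b = a + k \<longleftrightarrow> q^m = q^n + (q^M + q^j)" unfolding a_b_k_def by (metis of_nat_add of_nat_eq_iff)
  have d1: "dl (a - b - k) = 0"
    using diff_never[OF M j, of n m] c1 unfolding dl_def by auto
  have d2: "dl (a - b + k) = 0"
    using diff_never[OF M j, of m n] c2 unfolding dl_def by auto
  have "a + b + k > 0" unfolding a_b_k_def using q2 by (simp add: add_pos_nonneg)
  then have d4: "dl (a + b + k) = 0" unfolding dl_def by simp
  have d3: "dl (a + b - k) = (if (n = j \<and> m = M) \<or> (n = M \<and> m = j) then 1 else 0)"
  proof -
    have "(a + b = k) \<longleftrightarrow> (q^n + q^m = q^M + q^j)" unfolding a_b_k_def by (metis of_nat_add of_nat_eq_iff)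
    then have "(a + b - k = 0) \<longleftrightarrow> (q^n + q^m = q^M + q^j)" by auto
    then show ?thesis unfolding dl_def using sum_iff[OF M j, of n m] by auto
  qed
  have fe: "(\<lambda>x::real. sin (real q ^ n * x) * sin (real q ^ m * x) * cos (real (q^M + q^j) * x))
      = (\<lambda>x::real. sin (a * x) * sin (b * x) * cos (k * x))"
    unfolding a_b_k_def by simp
  have v: "pi / 4 * (dl (a - b - k) + dl (a - b + k) - dl (a + b - k) - dl (a + b + k))
     = (if (n = j \<and> m = M) \<or> (n = M \<and> m = j) then - pi / 4 else 0)"
    unfolding d1 d2 d3 d4 by simp
  show ?thesis unfolding fe v[symmetric] by (rule I)
qed

end


context WS begin

definition uu :: "nat \<Rightarrow> real \<Rightarrow> complex" where
  "uu n x = bco n * of_real (sin (real q ^ n * x))"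

lemma uu_sums: "(\<lambda>n. uu n x) sums Ss x"
  unfolding uu_def Ss_def using summable_Ss by (simp add: summable_sums)

lemma uu_bound: "norm (uu n x) \<le> amp n"
  unfolding uu_def by (rule term_bound)

lemma uu_cont: "continuous_on S (uu n)"
  unfolding uu_def by (intro continuous_intros)

lemma re_bco: "Re (bco j * cnj (bco M)) = amp j * amp M * cos (ph M - ph j)"
  by (simp add: bco_def exp_cnj Re_exp Im_exp cos_diff algebra_simps)

lemma P_fourier:
  assumes M: "M \<ge> 3" and j: "j \<le> 1"
  shows "((\<lambda>x. Pdens q s x t * cos (real (q^M + q^j) * x)) has_integral
           (- (NN^2 * pi / 2) * amp j * amp M * cos (ph M - ph j))) {0..pi}"
proof -
  define K where "K = real (q^M + q^j)"
  define c where "c x = (of_real (cos (K * x)) :: complex)" for x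
  define tau where "tau n m = (if (n = j \<and> m = M) \<or> (n = M \<and> m = j) then - pi / 4 else (0::real))" for n m
  have jM: "j \<noteq> M" using M j by simp
  have c_bound: "norm (c x) \<le> 1" for x unfolding c_def by simp
  have c_cont: "continuous_on S c" for S unfolding c_def by (intro continuous_intros)
  have G: "((\<lambda>x. uu n x * cnj (uu m x) * c x) has_integral (bco n * cnj (bco m) * of_real (tau n m))) {0..pi}" for n m
  proof -
    have "((\<lambda>x. sin (real q ^ n * x) * sin (real q ^ m * x) * cos (K * x)) has_integral tau n m) {0..pi}"
      unfolding K_def tau_def by (rule ssc_integral[OF M j])
    from has_integral_mult_right[OF has_integral_of_real[OF this], of "bco n * cnj (bco m)"]
    show ?thesis unfolding uu_def c_def by (simp add: mult_ac)
  qed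
  define val where "val n = (\<Sum>m. bco n * cnj (bco m) * of_real (tau n m))" for n
  have val_eq: "val n = (if n = j then bco j * cnj (bco M) * of_real (- pi / 4)
       else if n = M then bco M * cnj (bco j) * of_real (- pi / 4) else 0)" for n
  proof -
    have "val n = (\<Sum>m\<in>{j, M}. bco n * cnj (bco m) * of_real (tau n m))"
      unfolding val_def by (rule suminf_finite) (auto simp: tau_def)
    also have "\<dots> = bco n * cnj (bco j) * of_real (tau n j) + bco n * cnj (bco M) * of_real (tau n M)"
      using jM by simp
    finally show ?thesis using jM by (auto simp: tau_def)
  qed
  define F where "F n x = uu n x * (cnj (Ss x) * c x)" for n x
  have F_int: "(F n has_integral val n) {0..pi}" for n
  proof -
    have tb: "((\<lambda>x. \<Sum>m. uu n x * cnj (uu m x) * c x) has_integral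
          (\<Sum>m. integral {0..pi} (\<lambda>x. uu n x * cnj (uu m x) * c x))) {0..pi}"
    proof (rule tbt)
      show "continuous_on {0..pi} (\<lambda>x. uu n x * cnj (uu m x) * c x)" for m
        using uu_cont c_cont by (intro continuous_intros) auto
      show "norm (uu n x * cnj (uu m x) * c x) \<le> amp n * amp m" for m x
      proof -
        have "norm (uu n x * cnj (uu m x) * c x) = norm (uu n x) * norm (uu m x) * norm (c x)"
          by (simp add: norm_mult)
        also have "\<dots> \<le> amp n * amp m * 1"
          using uu_bound c_bound amp_pos by (intro mult_mono) (auto intro: less_imp_le)
        finally show ?thesis by simp
      qed
      show "summable (\<lambda>m. amp n * amp m)" by (intro summable_mult summable_amp)
    qed
    have "(\<lambda>m. uu n x * cnj (uu m x) * c x) sums F n x" for x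
    proof -
      have "(\<lambda>m. cnj (uu m x)) sums cnj (Ss x)" using uu_sums by (simp add: sums_cnj)
      from sums_mult2[OF sums_mult[OF this, of "uu n x"], of "c x"]
      show ?thesis unfolding F_def by (simp add: mult_ac)
    qed
    then have "(\<lambda>x. \<Sum>m. uu n x * cnj (uu m x) * c x) = F n" by (auto simp: sums_iff)
    moreover have "(\<Sum>m. integral {0..pi} (\<lambda>x. uu n x * cnj (uu m x) * c x)) = val n"
    proof -
      have "\<And>m. integral {0..pi} (\<lambda>x. uu n x * cnj (uu m x) * c x) = bco n * cnj (bco m) * of_real (tau n m)"
        using G by (rule integral_unique)
      then show ?thesis unfolding val_def by simp
    qed
    ultimately show ?thesis using tb by simp
  qed
  have tb2: "((\<lambda>x. \<Sum>n. F n x) has_integral (\<Sum>n. integral {0..pi} (F n))) {0..pi}"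
  proof (rule tbt)
    show "continuous_on {0..pi} (F n)" for n
      unfolding F_def using uu_cont c_cont Ss_cont by (intro continuous_intros) auto
    show "norm (F n x) \<le> amp n * AA" for n x
    proof -
      have "norm (F n x) = norm (uu n x) * norm (Ss x) * norm (c x)"
        by (simp add: F_def norm_mult)
      also have "\<dots> \<le> amp n * AA * 1"
        using uu_bound Ss_bound c_bound amp_pos AA_pos by (intro mult_mono) (auto intro: less_imp_le)
      finally show ?thesis by simp
    qed
    show "summable (\<lambda>n. amp n * AA)" by (intro summable_mult2 summable_amp)
  qed
  have sumF: "(\<Sum>n. F n x) = Ss x * cnj (Ss x) * c x" for x
  proof -
    from sums_mult2[OF uu_sums[of x], of "cnj (Ss x) * c x"]
    show ?thesis unfolding F_def by (simp add: sums_iff mult_ac)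
  qed
  have sumval: "(\<Sum>n. integral {0..pi} (F n)) = bco j * cnj (bco M) * of_real (- pi / 4) + bco M * cnj (bco j) * of_real (- pi / 4)"
  proof -
    have "\<And>n. integral {0..pi} (F n) = val n" using F_int by (rule integral_unique)
    then have "(\<Sum>n. integral {0..pi} (F n)) = (\<Sum>n. val n)" by simp
    also have "\<dots> = (\<Sum>n\<in>{j, M}. val n)" by (rule suminf_finite) (auto simp: val_eq)
    also have "\<dots> = val j + val M" using jM by simp
    finally show ?thesis using jM by (simp add: val_eq)
  qed
  define V where "V = - (NN^2 * pi / 2) * amp j * amp M * cos (ph M - ph j)"
  have Vc: "of_real (NN^2) * (bco j * cnj (bco M) * of_real (- pi / 4) + bco M * cnj (bco j) * of_real (- pi / 4))
      = (of_real V :: complex)"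
  proof -
    have "bco M * cnj (bco j) = cnj (bco j * cnj (bco M))" by simp
    then have "bco j * cnj (bco M) + bco M * cnj (bco j) = of_real (2 * (amp j * amp M * cos (ph M - ph j)))"
      by (simp only: complex_add_cnj re_bco)
    then have "bco j * cnj (bco M) * of_real (- pi / 4) + bco M * cnj (bco j) * of_real (- pi / 4)
       = of_real (2 * (amp j * amp M * cos (ph M - ph j))) * of_real (- pi / 4)"
      by (simp only: distrib_right[symmetric])
    note h = this
    show ?thesis unfolding h V_def of_real_mult[symmetric] of_real_power[symmetric]
      by (simp only: of_real_eq_iff) (simp add: algebra_simps)
  qed
  have cint: "((\<lambda>x. of_real (Pdens q s x t * cos (K * x))) has_integral (of_real V :: complex)) {0..pi}"
  proof -
    have e: "(of_real (Pdens q s x t * cos (K * x)) :: complex) = of_real (NN^2) * (\<Sum>n. F n x)" for x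
      unfolding sumF c_def Pdens_eq by (simp add: complex_norm_square[symmetric] mult_ac)
    show ?thesis unfolding e using has_integral_mult_right[OF tb2, of "of_real (NN^2)"] sumval Vc by simp
  qed
  have gi: "(\<lambda>x. Pdens q s x t * cos (K * x)) integrable_on {0..pi}"
    using P_cont by (intro integrable_continuous_real continuous_intros) auto
  then have "((\<lambda>x. Pdens q s x t * cos (K * x)) has_integral integral {0..pi} (\<lambda>x. Pdens q s x t * cos (K * x))) {0..pi}"
    by (simp add: has_integral_integral)
  from has_integral_of_real[OF this, where 'b=complex] cint
  have "(of_real (integral {0..pi} (\<lambda>x. Pdens q s x t * cos (K * x))) :: complex) = of_real V"
    by (rule has_integral_unique)
  then have "integral {0..pi} (\<lambda>x. Pdens q s x t * cos (K * x)) = V" by simp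
  then have "((\<lambda>x. Pdens q s x t * cos (K * x)) has_integral V) {0..pi}"
    using gi by (metis has_integral_integral)
  then show ?thesis unfolding K_def V_def .
qed

end


lemma cs_id: fixes a d :: real shows "(cos a)^2 + (cos (a - d))^2 = 1 + cos (2*a - d) * cos d"
proof -
  have e: "2*a - d = a + (a - d)" by simp
  have c2: "cos (2*a - d) = cos a * cos (a-d) - sin a * sin (a-d)" unfolding e by (rule cos_add)
  have c1: "cos (a - d) = cos a * cos d + sin a * sin d" by (rule cos_diff)
  have s1: "sin (a - d) = sin a * cos d - cos a * sin d" by (rule sin_diff)
  define cA sA cD sD where "cA = cos a" "sA = sin a" "cD = cos d" "sD = sin d"
  have p1: "sA^2 + cA^2 = 1" "sD^2 + cD^2 = 1" unfolding cA_sA_cD_sD_def by simp_all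
  have "cA^2 + (cA * cD + sA * sD)^2 - (1 + (cA * (cA * cD + sA * sD) - sA * (sA * cD - cA * sD))  *  cD)
     = sA^2  *  (sD^2 + cD^2 - 1) + (cA^2 + sA^2 - 1)" by algebra
  also have "\<dots> = 0" using p1 by simp
  finally show ?thesis unfolding c2 c1 s1 cA_sA_cD_sD_def[symmetric] by simp
qed

context WS begin

lemma phase: "\<exists>c0>0. \<forall>M. \<exists>j\<le>1. c0 \<le> \<bar>cos (ph M - ph j)\<bar>"
proof -
  define d where "d = ph 1 - ph 0"
  show ?thesis
  proof (cases "sin d = 0")
    case True
    then obtain i :: int where i: "d = of_int i * pi" by (auto simp: sin_zero_iff_int2)
    have "\<bar>cos (ph M - ph 0)\<bar> = 1" for M
    proof -
      define Q where "Q = real q ^ 2"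
      have "real q ^ (2 * M) = Q ^ M" unfolding Q_def by (simp add: power_mult)
      then have "ph M - ph 0 = (Q ^ M - 1) * t" unfolding ph_def by (simp add: algebra_simps)
      also have "Q ^ M - 1 = (Q - 1) * (\<Sum>i<M. Q ^ i)" by (rule power_diff_1_eq)
      also have "(\<Sum>i<M. Q ^ i) = real (\<Sum>i<M. (q^2) ^ i)" unfolding Q_def by simp
      finally have e1: "ph M - ph 0 = (Q - 1) * real (\<Sum>i<M. (q^2) ^ i) * t" by simp
      have "d = (Q - 1) * t" unfolding d_def ph_def Q_def by (simp add: algebra_simps power2_eq_square)
      then have h: "(Q - 1) * t = of_int i * pi" using i by simp
      have "(Q - 1) * real (\<Sum>i<M. (q^2) ^ i) * t = ((Q - 1) * t) * real (\<Sum>i<M. (q^2) ^ i)"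
        by (simp add: algebra_simps)
      also have "\<dots> = pi * of_int (i * int (\<Sum>i<M. (q^2) ^ i))" unfolding h by simp
      finally have "ph M - ph 0 = pi * of_int (i * int (\<Sum>i<M. (q^2) ^ i))" using e1 by simp
      then have "cos (ph M - ph 0) = (if even (i * int (\<Sum>i<M. (q^2) ^ i)) then 1 else -1)"
        by (simp only: cos_npi_int)
      then show ?thesis by simp
    qed
    then show ?thesis by (intro exI[of _ 1]) (auto intro!: exI[of _ 0])
  next
    case False
    have cd: "\<bar>cos d\<bar> < 1"
    proof -
      have "(sin d)^2 > 0" using False by simp
      then have "(cos d)^2 < 1" using sin_cos_squared_add[of d] by linarith
      then show ?thesis by (simp add: abs_square_less_1)
    qed
    define c0 where "c0 = sqrt ((1 - \<bar>cos d\<bar>) / 2)"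
    have c0: "c0 > 0" unfolding c0_def using cd by simp
    have "\<exists>j\<le>1. c0 \<le> \<bar>cos (ph M - ph j)\<bar>" for M
    proof -
      define a where "a = ph M - ph 0"
      have a1: "ph M - ph 1 = a - d" unfolding a_def d_def by simp
      have "(cos a)^2 + (cos (a - d))^2 \<ge> 1 - \<bar>cos d\<bar>"
      proof -
        have "cos (2*a - d) * cos d \<ge> - \<bar>cos d\<bar>"
        proof -
          have "\<bar>cos (2*a - d) * cos d\<bar> \<le> 1 * \<bar>cos d\<bar>"
            unfolding abs_mult by (intro mult_right_mono) auto
          then show ?thesis by linarith
        qed
        then show ?thesis using cs_id[of a d] by linarith
      qed
      then have "(cos a)^2 \<ge> c0^2 \<or> (cos (a - d))^2 \<ge> c0^2"
        unfolding c0_def using cd by auto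
      then have "\<bar>cos a\<bar> \<ge> c0 \<or> \<bar>cos (a - d)\<bar> \<ge> c0"
        using c0 by (auto simp: abs_le_square_iff[symmetric] power2_abs)
      then show ?thesis unfolding a_def using a1 by (metis a_def le_numeral_extra(4) zero_le_one)
    qed
    then show ?thesis using c0 by blast
  qed
qed

end


definition GS :: "(real \<times> real) set \<Rightarrow> real \<Rightarrow> (int \<times> int) set" where
  "GS A \<delta> = {m :: int \<times> int. \<exists>p \<in> A.
      of_int (fst m) * \<delta> \<le> fst p \<and> fst p \<le> (of_int (fst m) + 1) * \<delta> \<and>
      of_int (snd m) * \<delta> \<le> snd p \<and> snd p \<le> (of_int (snd m) + 1) * \<delta>}"

lemma gc_eq: "grid_count A \<delta> = card (GS A \<delta>)"
  by (simp add: grid_count_def GS_def)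

lemma int_range:
  fixes \<delta> x a b :: real and m :: int
  assumes "\<delta> > 0" "of_int m * \<delta> \<le> x" "x \<le> (of_int m + 1) * \<delta>" "a \<le> x" "x \<le> b"
  shows "m \<in> {\<lfloor>a / \<delta>\<rfloor> - 1 .. \<lceil>b / \<delta>\<rceil>}"
proof -
  have "of_int m \<le> x / \<delta>" using assms by (simp add: field_simps)
  also have "x / \<delta> \<le> b / \<delta>" using assms by (simp add: divide_right_mono)
  finally have m1: "m \<le> \<lceil>b / \<delta>\<rceil>" by (meson ceiling_mono ceiling_of_int order.trans le_of_int_ceiling of_int_le_iff)
  have "a / \<delta> \<le> x / \<delta>" using assms by (simp add: divide_right_mono)
  also have "x / \<delta> \<le> of_int m + 1" using assms by (simp add: field_simps)
  finally have "\<lfloor>a / \<delta>\<rfloor> \<le> m + 1" by (simp add: floor_le_iff)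
  then show ?thesis using m1 by simp
qed

lemma finite_GS:
  assumes "A \<subseteq> {a..b} \<times> {c..d}" "\<delta> > 0"
  shows "finite (GS A \<delta>)"
proof -
  have "GS A \<delta> \<subseteq> {\<lfloor>a / \<delta>\<rfloor> - 1 .. \<lceil>b / \<delta>\<rceil>} \<times> {\<lfloor>c / \<delta>\<rfloor> - 1 .. \<lceil>d / \<delta>\<rceil>}"
  proof
    fix m assume "m \<in> GS A \<delta>"
    then obtain p where p: "p \<in> A" "of_int (fst m) * \<delta> \<le> fst p" "fst p \<le> (of_int (fst m) + 1) * \<delta>"
      "of_int (snd m) * \<delta> \<le> snd p" "snd p \<le> (of_int (snd m) + 1) * \<delta>" unfolding GS_def by auto
    have "fst p \<in> {a..b}" "snd p \<in> {c..d}" using p(1) assms(1) by auto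
    then show "m \<in> {\<lfloor>a / \<delta>\<rfloor> - 1 .. \<lceil>b / \<delta>\<rceil>} \<times> {\<lfloor>c / \<delta>\<rfloor> - 1 .. \<lceil>d / \<delta>\<rceil>}"
      using int_range[OF assms(2) p(2,3)] int_range[OF assms(2) p(4,5)] by (cases m) auto
  qed
  then show ?thesis by (rule finite_subset) auto
qed

lemma graph_sub:
  assumes "\<And>x. x \<in> {0..pi} \<Longrightarrow> \<bar>f x\<bar> \<le> B"
  shows "graph_on {0..pi} f \<subseteq> {0..pi} \<times> {-B..B}"
proof
  fix p assume "p \<in> graph_on {0..pi} f"
  then obtain u where "p = (u, f u)" "u \<in> {0..pi}" by (auto simp: graph_on_def)
  then show "p \<in> {0..pi} \<times> {-B..B}" using assms[of u] by (auto simp: abs_le_iff)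
qed

lemma coord_cmp:
  fixes x \<delta> \<delta>' :: real and m' :: int
  assumes d: "0 < \<delta>" "\<delta> \<le> \<delta>'" and m': "of_int m' * \<delta>' \<le> x" "x \<le> (of_int m' + 1) * \<delta>'"
  shows "m' \<in> {\<lceil>of_int \<lfloor>x / \<delta>\<rfloor> * \<delta> / \<delta>' - 1\<rceil> .. \<lfloor>of_int \<lfloor>x / \<delta>\<rfloor> * \<delta> / \<delta>' + 1\<rfloor>}"
proof -
  define m where "m = \<lfloor>x / \<delta>\<rfloor>"
  define r where "r = of_int m * \<delta> / \<delta>'"
  have dp: "\<delta>' > 0" using d by simp
  have "of_int m \<le> x / \<delta>" "x / \<delta> < of_int m + 1" unfolding m_def by linarith+
  then have mx: "of_int m * \<delta> \<le> x" "x < (of_int m + 1) * \<delta>" using d by (simp_all add: field_simps)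
  have "of_int m' \<le> x / \<delta>'" using m' dp by (simp add: field_simps)
  also have "x / \<delta>' \<le> ((of_int m + 1) * \<delta>) / \<delta>'" using mx dp by (simp add: divide_right_mono)
  also have "\<dots> = r + \<delta> / \<delta>'" unfolding r_def by (simp add: add_divide_distrib algebra_simps)
  also have "\<dots> \<le> r + 1" using d dp by simp
  finally have u: "m' \<le> \<lfloor>r + 1\<rfloor>" by (simp only: le_floor_iff)
  have "r - 1 \<le> x / \<delta>' - 1" unfolding r_def using mx dp by (simp add: divide_right_mono)
  also have "x / \<delta>' - 1 \<le> of_int m'" using m' dp by (simp add: field_simps)
  finally have l: "\<lceil>r - 1\<rceil> \<le> m'" by (simp only: ceiling_le_iff)
  show ?thesis using u l unfolding r_def m_def by simp
qed

lemma card_int_ivl3: "card {\<lceil>(r::real) - 1\<rceil> .. \<lfloor>r + 1\<rfloor>} \<le> 3"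
proof -
  have "\<lfloor>r + 1\<rfloor> - \<lceil>r - 1\<rceil> \<le> 2"
  proof -
    have "real_of_int \<lfloor>r + 1\<rfloor> \<le> r + 1" "r - 1 \<le> real_of_int \<lceil>r - 1\<rceil>" by linarith+
    then have "real_of_int (\<lfloor>r + 1\<rfloor> - \<lceil>r - 1\<rceil>) \<le> 2" by simp
    then show ?thesis by linarith
  qed
  then have h: "\<lfloor>r + 1\<rfloor> - \<lceil>r - 1\<rceil> + 1 \<le> 3" by linarith
  have "card {\<lceil>r - 1\<rceil> .. \<lfloor>r + 1\<rfloor>} = nat (\<lfloor>r + 1\<rfloor> - \<lceil>r - 1\<rceil> + 1)" by (rule card_atLeastAtMost_int)
  also have "\<dots> \<le> nat 3" using h by (rule nat_mono)
  finally show ?thesis by simp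
qed

lemma GS_compare:
  assumes fin: "finite (GS A \<delta>)" and d: "0 < \<delta>" "\<delta> \<le> \<delta>'"
  shows "card (GS A \<delta>') \<le> 9 * card (GS A \<delta>)"
proof -
  define F where "F m = {\<lceil>of_int (fst m) * \<delta> / \<delta>' - 1\<rceil> .. \<lfloor>of_int (fst m) * \<delta> / \<delta>' + 1\<rfloor>} \<times>
     {\<lceil>of_int (snd m) * \<delta> / \<delta>' - 1\<rceil> .. \<lfloor>of_int (snd m) * \<delta> / \<delta>' + 1\<rfloor>}" for m :: "int \<times> int"
  have sub: "GS A \<delta>' \<subseteq> (\<Union>m\<in>GS A \<delta>. F m)"
  proof
    fix m' assume "m' \<in> GS A \<delta>'"
    then obtain p where p: "p \<in> A" "of_int (fst m') * \<delta>' \<le> fst p" "fst p \<le> (of_int (fst m') + 1) * \<delta>'"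
      "of_int (snd m') * \<delta>' \<le> snd p" "snd p \<le> (of_int (snd m') + 1) * \<delta>'" unfolding GS_def by auto
    define m where "m = (\<lfloor>fst p / \<delta>\<rfloor>, \<lfloor>snd p / \<delta>\<rfloor>)"
    have fl: "of_int \<lfloor>y / \<delta>\<rfloor> * \<delta> \<le> y \<and> y \<le> (of_int \<lfloor>y / \<delta>\<rfloor> + 1) * \<delta>" for y
    proof -
      have "of_int \<lfloor>y / \<delta>\<rfloor> * \<delta> \<le> (y / \<delta>) * \<delta>" using d by (intro mult_right_mono) auto
      moreover have "(y / \<delta>) * \<delta> \<le> (of_int \<lfloor>y / \<delta>\<rfloor> + 1) * \<delta>" using d by (intro mult_right_mono) linarith+
      ultimately show ?thesis using d by simp
    qed
    have "m \<in> GS A \<delta>" unfolding GS_def m_def using p(1) fl by auto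
    moreover have "m' \<in> F m" unfolding F_def m_def
      using coord_cmp[OF d p(2,3)] coord_cmp[OF d p(4,5)] by (cases m') auto
    ultimately show "m' \<in> (\<Union>m\<in>GS A \<delta>. F m)" by auto
  qed
  have cF: "card (F m) \<le> 9" for m
  proof -
    have "card (F m) = card {\<lceil>of_int (fst m) * \<delta> / \<delta>' - 1\<rceil> .. \<lfloor>of_int (fst m) * \<delta> / \<delta>' + 1\<rfloor>} *
       card {\<lceil>of_int (snd m) * \<delta> / \<delta>' - 1\<rceil> .. \<lfloor>of_int (snd m) * \<delta> / \<delta>' + 1\<rfloor>}"
      unfolding F_def by (rule card_cartesian_product)
    also have "\<dots> \<le> 3 * 3" by (intro mult_le_mono card_int_ivl3)
    finally show ?thesis by simp
  qed
  have "card (GS A \<delta>') \<le> card (\<Union>m\<in>GS A \<delta>. F m)"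
    by (rule card_mono[OF _ sub]) (use fin in \<open>auto simp: F_def\<close>)
  also have "\<dots> \<le> (\<Sum>m\<in>GS A \<delta>. card (F m))" by (rule card_UN_le[OF fin])
  also have "\<dots> \<le> (\<Sum>m\<in>GS A \<delta>. 9)" by (intro sum_mono cF)
  finally show ?thesis by simp
qed


lemma col_osc:
  fixes f :: "real \<Rightarrow> real" and C :: "int set"
  assumes cont: "continuous_on {u..u+l} f" and l: "l > 0" and fin: "finite C"
    and hit: "\<And>m2 x. x \<in> {u..u+l} \<Longrightarrow> of_int m2 * l \<le> f x \<Longrightarrow> f x \<le> (of_int m2 + 1) * l \<Longrightarrow> m2 \<in> C"
    and x: "x \<in> {u..u+l}"
  shows "\<bar>f x - f u\<bar> \<le> l * real (card C)"
proof -
  define lo where "lo = min (f u) (f x)"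
  define hi where "hi = max (f u) (f x)"
  have ivt: "\<exists>z\<in>{u..u+l}. f z = y" if "lo \<le> y" "y \<le> hi" for y
  proof -
    have cx: "continuous_on {u..x} f" by (rule continuous_on_subset[OF cont]) (use x in auto)
    have ux: "u \<le> x" using x by simp
    show ?thesis
    proof (cases "f u \<le> f x")
      case True
      then have "f u \<le> y" "y \<le> f x" using that unfolding lo_def hi_def by auto
      from IVT'[OF this ux cx] obtain z where "u \<le> z" "z \<le> x" "f z = y" by blast
      then show ?thesis using x by auto
    next
      case False
      then have "f x \<le> y" "y \<le> f u" using that unfolding lo_def hi_def by auto
      from IVT2'[OF this ux cx] obtain z where "u \<le> z" "z \<le> x" "f z = y" by blast
      then show ?thesis using x by auto
    qed
  qed
  define i0 where "i0 = \<lfloor>lo / l\<rfloor>"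
  define i1 where "i1 = \<lfloor>hi / l\<rfloor>"
  have sub: "{i0..i1} \<subseteq> C"
  proof
    fix m2 assume m2: "m2 \<in> {i0..i1}"
    define y where "y = max lo (of_int m2 * l)"
    have "of_int m2 \<le> hi / l" using m2 unfolding i1_def by (simp add: le_floor_iff)
    then have a: "of_int m2 * l \<le> hi" using l by (simp add: field_simps)
    have "lo / l < of_int i0 + 1" unfolding i0_def by linarith
    also have "of_int i0 + 1 \<le> of_int m2 + (1::real)" using m2 by simp
    finally have b: "lo < (of_int m2 + 1) * l" using l by (simp add: field_simps)
    have y1: "lo \<le> y" "y \<le> hi" unfolding y_def using a by (auto simp: lo_def hi_def)
    have y2: "of_int m2 * l \<le> y" "y \<le> (of_int m2 + 1) * l" unfolding y_def using b l by auto
    from ivt[OF y1] obtain z where z: "z \<in> {u..u+l}" "f z = y" by blast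
    show "m2 \<in> C" using hit[OF z(1)] y2 z(2) by simp
  qed
  have "card {i0..i1} \<le> card C" using sub fin by (rule card_mono[rotated])
  then have c1: "real (nat (i1 - i0 + 1)) \<le> real (card C)" by simp
  have "hi / l < of_int i1 + 1" "of_int i0 \<le> lo / l" unfolding i0_def i1_def by linarith+
  then have "hi / l - lo / l < of_int (i1 - i0 + 1)" by simp
  also have "\<dots> \<le> real (nat (i1 - i0 + 1))" by simp
  finally have "(hi - lo) / l \<le> real (card C)" using c1 by (simp add: diff_divide_distrib)
  then have "hi - lo \<le> l * real (card C)" using l by (simp add: field_simps)
  moreover have "\<bar>f x - f u\<bar> = hi - lo" unfolding hi_def lo_def by auto
  ultimately show ?thesis by simp
qed

lemma cos_period_integral:
  assumes K: "K * l = 2 * pi" and l: "l > 0"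
  shows "((\<lambda>x. cos (K * x)) has_integral 0) {u..u+l}"
proof -
  have K0: "K \<noteq> 0" using K by auto
  have d: "((\<lambda>x. sin (K * x) / K) has_vector_derivative cos (K * x)) (at x within {u..u+l})" for x
    using K0 by (auto intro!: derivative_eq_intros simp: has_real_derivative_iff_has_vector_derivative[symmetric])
  have "((\<lambda>x. cos (K * x)) has_integral (sin (K * (u + l)) / K - sin (K * u) / K)) {u..u+l}"
    by (rule fundamental_theorem_of_calculus) (use d l in auto)
  moreover have "sin (K * (u + l)) = sin (K * u)"
  proof -
    have "K * (u + l) = K * u + 2 * pi" using K by (simp add: algebra_simps)
    then show ?thesis by (simp add: sin_periodic)
  qed
  ultimately show ?thesis by simp
qed

lemma col_int:
  fixes f :: "real \<Rightarrow> real"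
  assumes cont: "continuous_on {u..u+l} f" and l: "l > 0" and K: "K * l = 2 * pi"
    and W: "\<And>x. x \<in> {u..u+l} \<Longrightarrow> \<bar>f x - f u\<bar> \<le> W"
  shows "\<bar>integral {u..u+l} (\<lambda>x. f x * cos (K * x))\<bar> \<le> W * l"
proof -
  have W0: "0 \<le> W" using W[of u] l by simp
  have ci: "((\<lambda>x. cos (K * x)) has_integral 0) {u..u+l}" by (rule cos_period_integral[OF K l])
  have g1i: "(\<lambda>x. (f x - f u) * cos (K * x)) integrable_on {u..u+l}"
    using cont by (intro integrable_continuous_real continuous_intros) auto
  then have g1: "((\<lambda>x. (f x - f u) * cos (K * x)) has_integral integral {u..u+l} (\<lambda>x. (f x - f u) * cos (K * x))) {u..u+l}"
    by (simp add: has_integral_integral)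
  have g1c: "((\<lambda>x. (f x - f u) * cos (K * x)) has_integral integral {u..u+l} (\<lambda>x. (f x - f u) * cos (K * x))) (cbox u (u+l))"
    using g1 by simp
  have bnd: "norm ((f x - f u) * cos (K * x)) \<le> W" if "x \<in> cbox u (u+l)" for x
  proof -
    have "norm ((f x - f u) * cos (K * x)) = \<bar>f x - f u\<bar> * \<bar>cos (K * x)\<bar>" by (simp add: abs_mult)
    also have "\<dots> \<le> W * 1" using W[of x] that W0 by (intro mult_mono) auto
    finally show ?thesis by simp
  qed
  have b: "norm (integral {u..u+l} (\<lambda>x. (f x - f u) * cos (K * x))) \<le> W * l"
    using has_integral_bound[OF W0 g1c bnd] l by simp
  have "((\<lambda>x. (f x - f u) * cos (K * x) + f u * cos (K * x)) has_integral
      integral {u..u+l} (\<lambda>x. (f x - f u) * cos (K * x)) + f u * 0) {u..u+l}"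
    by (intro has_integral_add g1 has_integral_mult_right ci)
  then have "integral {u..u+l} (\<lambda>x. f x * cos (K * x)) = integral {u..u+l} (\<lambda>x. (f x - f u) * cos (K * x))"
    by (simp add: algebra_simps integral_unique)
  then show ?thesis using b l by simp
qed


lemma split_cols:
  fixes g :: "real \<Rightarrow> real"
  assumes gi: "g integrable_on {0..b}" and l: "l > 0" and n: "real n * l \<le> b"
  shows "integral {0..real n * l} g = (\<Sum>a<n. integral {real a * l .. real a * l + l} g)"
  using n
proof (induction n)
  case 0 then show ?case by simp
next
  case (Suc n)
  have "real n * l \<le> real (Suc n) * l" using l by (intro mult_right_mono) auto
  then have b1: "real n * l \<le> b" using Suc.prems by linarith
  have gi2: "g integrable_on {0..real (Suc n) * l}"
    by (rule integrable_on_subinterval[OF gi]) (use Suc.prems in auto)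
  have "integral {0..real n * l} g + integral {real n * l..real (Suc n) * l} g = integral {0..real (Suc n) * l} g"
    by (rule Henstock_Kurzweil_Integration.integral_combine) (use l gi2 in auto)
  then show ?case using Suc.IH[OF b1] by (simp add: algebra_simps)
qed

lemma LOW:
  fixes f :: "real \<Rightarrow> real"
  assumes cont: "continuous_on {0..pi} f" and B: "\<And>x. x \<in> {0..pi} \<Longrightarrow> \<bar>f x\<bar> \<le> B"
    and l: "l > 0" and K: "K * l = 2 * pi"
  shows "\<bar>integral {0..pi} (\<lambda>x. f x * cos (K * x))\<bar> \<le> l^2 * real (card (GS (graph_on {0..pi} f) l)) + B * l"
proof -
  define G where "G = GS (graph_on {0..pi} f) l"
  have fin: "finite G" unfolding G_def by (rule finite_GS[OF graph_sub[OF B] l])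
  define N where "N = nat \<lfloor>pi / l\<rfloor>"
  have fl0: "0 \<le> \<lfloor>pi / l\<rfloor>" using l by simp
  have RN: "real N = of_int \<lfloor>pi / l\<rfloor>" unfolding N_def using fl0 by simp
  have N1: "real N * l \<le> pi"
  proof -
    have "real N \<le> pi / l" unfolding RN by simp
    then show ?thesis using l by (simp add: field_simps)
  qed
  have N2: "pi - real N * l \<le> l"
  proof -
    have "pi / l < real N + 1" unfolding RN by linarith
    then show ?thesis using l by (simp add: field_simps)
  qed
  define C where "C a = {m2. (int a, m2) \<in> G}" for a :: nat
  have finC: "finite (C a)" for a
  proof -
    have "C a \<subseteq> snd ` G" unfolding C_def by force
    then show ?thesis using fin by (meson finite_imageI finite_subset)
  qed
  define g where "g x = f x * cos (K * x)" for x
  have gi: "g integrable_on {0..pi}" unfolding g_def using cont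
    by (intro integrable_continuous_real continuous_intros) auto
  have colb: "\<bar>integral {real a * l .. real a * l + l} g\<bar> \<le> l^2 * real (card (C a))" if a: "a < N" for a
  proof -
    have colsub: "{real a * l .. real a * l + l} \<subseteq> {0..pi}"
    proof -
      have "real a * l + l = real (Suc a) * l" by (simp add: algebra_simps)
      also have "\<dots> \<le> real N * l" using a l by (intro mult_right_mono) auto
      finally show ?thesis using N1 l by auto
    qed
    have cc: "continuous_on {real a * l .. real a * l + l} f" using cont colsub by (rule continuous_on_subset)
    have W: "\<bar>f x - f (real a * l)\<bar> \<le> l * real (card (C a))" if x: "x \<in> {real a * l .. real a * l + l}" for x
    proof (rule col_osc[OF cc l finC _ x])
      fix m2 y assume y: "y \<in> {real a * l .. real a * l + l}" "of_int m2 * l \<le> f y" "f y \<le> (of_int m2 + 1) * l"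
      have "y \<in> {0..pi}" using y(1) colsub by blast
      then have "(y, f y) \<in> graph_on {0..pi} f" by (auto simp: graph_on_def)
      then show "m2 \<in> C a" unfolding C_def G_def GS_def using y by (intro CollectI bexI[of _ "(y, f y)"]) (auto simp: algebra_simps)
    qed
    have "\<bar>integral {real a * l .. real a * l + l} g\<bar> \<le> l * real (card (C a)) * l"
      unfolding g_def by (rule col_int[OF cc l K W])
    then show ?thesis by (simp add: power2_eq_square algebra_simps)
  qed
  have sumC: "(\<Sum>a<N. card (C a)) \<le> card G"
  proof -
    have "(\<Sum>a<N. card (C a)) = (\<Sum>a<N. card (Pair (int a) ` C a))"
      by (intro sum.cong refl) (simp add: card_image inj_on_def)
    also have "\<dots> = card (\<Union>a<N. Pair (int a) ` C a)"
      by (rule card_UN_disjoint[symmetric]) (auto simp: finC)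
    also have "\<dots> \<le> card G"
      by (rule card_mono[OF fin]) (auto simp: C_def)
    finally show ?thesis .
  qed
  have split1: "integral {0..real N * l} g + integral {real N * l..pi} g = integral {0..pi} g"
    by (rule Henstock_Kurzweil_Integration.integral_combine) (use N1 l gi in auto)
  have split2: "integral {0..real N * l} g = (\<Sum>a<N. integral {real a * l .. real a * l + l} g)"
    by (rule split_cols[OF gi l N1])
  have rest: "\<bar>integral {real N * l..pi} g\<bar> \<le> B * l"
  proof -
    have gi3: "g integrable_on {real N * l..pi}"
      by (rule integrable_on_subinterval[OF gi]) (use l in auto)
    have B0: "0 \<le> B" using B[of 0] by simp
    have hb: "norm (g x) \<le> B" if "x \<in> cbox (real N * l) pi" for x
    proof -
      have "0 \<le> real N * l" using l by simp
      then have "x \<in> {0..pi}" using that by auto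
      then have "\<bar>f x\<bar> * \<bar>cos (K * x)\<bar> \<le> B * 1" using B B0 by (intro mult_mono) auto
      then show ?thesis unfolding g_def by (simp add: abs_mult)
    qed
    have "((g has_integral integral {real N * l..pi} g) (cbox (real N * l) pi))"
      using gi3 by (simp add: has_integral_integral)
    from has_integral_bound[OF B0 this hb]
    have "\<bar>integral {real N * l..pi} g\<bar> \<le> B * (pi - real N * l)" using N1 by simp
    also have "\<dots> \<le> B * l" using N2 B0 by (intro mult_left_mono) auto
    finally show ?thesis .
  qed
  have "\<bar>integral {0..pi} g\<bar> \<le> \<bar>integral {0..real N * l} g\<bar> + \<bar>integral {real N * l..pi} g\<bar>"
    unfolding split1[symmetric] by simp
  also have "\<bar>integral {0..real N * l} g\<bar> \<le> (\<Sum>a<N. \<bar>integral {real a * l .. real a * l + l} g\<bar>)"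
    unfolding split2 by (rule sum_abs)
  also have "\<dots> \<le> (\<Sum>a<N. l^2 * real (card (C a)))" by (intro sum_mono colb) auto
  also have "\<dots> = l^2 * real (\<Sum>a<N. card (C a))" by (simp add: sum_distrib_left)
  also have "\<dots> \<le> l^2 * real (card G)" using sumC by (intro mult_left_mono) (simp_all only: of_nat_le_iff zero_le_power2)
  finally show ?thesis using rest unfolding g_def G_def by simp
qed


lemma LOW1:
  fixes f :: "real \<Rightarrow> real"
  assumes fin: "finite (GS (graph_on {0..pi} f) d)" and d: "d > 0"
  shows "pi / d - 1 \<le> real (card (GS (graph_on {0..pi} f) d))"
proof -
  define N where "N = nat \<lfloor>pi / d\<rfloor>"
  have fl0: "0 \<le> \<lfloor>pi / d\<rfloor>" using d by simp
  have RN: "real N = of_int \<lfloor>pi / d\<rfloor>" unfolding N_def using fl0 by simp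
  define h where "h a = (int a, \<lfloor>f (real a * d) / d\<rfloor>)" for a :: nat
  have "h ` {..<N} \<subseteq> GS (graph_on {0..pi} f) d"
  proof
    fix m assume "m \<in> h ` {..<N}"
    then obtain a where a: "a < N" "m = h a" by auto
    have "real a \<le> real N" using a by simp
    also have "\<dots> \<le> pi / d" unfolding RN by simp
    finally have "real a * d \<le> pi" using d by (simp add: field_simps)
    then have x: "real a * d \<in> {0..pi}" using d by simp
    define y where "y = f (real a * d)"
    have "of_int \<lfloor>y / d\<rfloor> * d \<le> (y / d) * d" using d by (intro mult_right_mono) auto
    moreover have "(y / d) * d \<le> (of_int \<lfloor>y / d\<rfloor> + 1) * d" using d by (intro mult_right_mono) linarith+
    ultimately have yy: "of_int \<lfloor>y / d\<rfloor> * d \<le> y" "y \<le> (of_int \<lfloor>y / d\<rfloor> + 1) * d" using d by auto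
    show "m \<in> GS (graph_on {0..pi} f) d" unfolding GS_def a(2) h_def
      using x yy unfolding y_def
      by (intro CollectI bexI[of _ "(real a * d, f (real a * d))"]) (auto simp: graph_on_def algebra_simps)
  qed
  moreover have "inj_on h {..<N}" unfolding h_def inj_on_def by auto
  ultimately have "card {..<N} \<le> card (GS (graph_on {0..pi} f) d)"
    using fin by (metis card_image card_mono)
  then have "real N \<le> real (card (GS (graph_on {0..pi} f) d))" by simp
  moreover have "pi / d - 1 \<le> real N" unfolding RN by linarith
  ultimately show ?thesis by linarith
qed

lemma UP:
  fixes f :: "real \<Rightarrow> real"
  assumes fin: "finite (GS (graph_on {0..pi} f) d)" and d: "d > 0"
    and hol: "\<And>x y. x \<in> {0..pi} \<Longrightarrow> y \<in> {0..pi} \<Longrightarrow> \<bar>x - y\<bar> \<le> d \<Longrightarrow> \<bar>f x - f y\<bar> \<le> W"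
    and W: "W \<ge> 0"
  shows "real (card (GS (graph_on {0..pi} f) d)) \<le> (pi / d + 3) * (2 * W / d + 2)"
proof -
  define G where "G = GS (graph_on {0..pi} f) d"
  define I where "I = {-1 .. \<lceil>pi / d\<rceil>}"
  define R where "R a = {m2. (a, m2) \<in> G}" for a
  have memG: "(a, m2) \<in> G \<longleftrightarrow> (\<exists>x\<in>{0..pi}. of_int a * d \<le> x \<and> x \<le> (of_int a + 1) * d \<and>
       of_int m2 * d \<le> f x \<and> f x \<le> (of_int m2 + 1) * d)" for a m2
    unfolding G_def GS_def graph_on_def by auto
  have sub: "G \<subseteq> (\<Union>a\<in>I. Pair a ` R a)"
  proof
    fix m assume m: "m \<in> G"
    obtain a m2 where am: "m = (a, m2)" by (cases m)
    then obtain x where x: "x \<in> {0..pi}" "of_int a * d \<le> x" "x \<le> (of_int a + 1) * d" using m memG by blast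
    have "a \<in> {\<lfloor>0 / d\<rfloor> - 1 .. \<lceil>pi / d\<rceil>}" by (rule int_range[OF d x(2,3)]) (use x in auto)
    then have "a \<in> I" unfolding I_def by simp
    then show "m \<in> (\<Union>a\<in>I. Pair a ` R a)" using m am unfolding R_def by auto
  qed
  have finR: "finite (R a)" for a
  proof -
    have "R a \<subseteq> snd ` G" unfolding R_def by force
    then show ?thesis using fin unfolding G_def by (meson finite_imageI finite_subset)
  qed
  have cR: "real (card (R a)) \<le> 2 * W / d + 2" for a
  proof (cases "R a = {}")
    case True then show ?thesis using W d by simp
  next
    case False
    then obtain m0 where "m0 \<in> R a" by auto
    then obtain x0 where x0: "x0 \<in> {0..pi}" "of_int a * d \<le> x0" "x0 \<le> (of_int a + 1) * d"
      unfolding R_def using memG by blast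
    define lo where "lo = (f x0 - W) / d - 1"
    define hi where "hi = (f x0 + W) / d"
    have "R a \<subseteq> {\<lceil>lo\<rceil> .. \<lfloor>hi\<rfloor>}"
    proof
      fix m2 assume "m2 \<in> R a"
      then obtain x where x: "x \<in> {0..pi}" "of_int a * d \<le> x" "x \<le> (of_int a + 1) * d"
        "of_int m2 * d \<le> f x" "f x \<le> (of_int m2 + 1) * d"
        unfolding R_def using memG by blast
      have "\<bar>x - x0\<bar> \<le> d" using x x0 by (simp add: algebra_simps abs_le_iff)
      then have fx: "\<bar>f x - f x0\<bar> \<le> W" using hol x(1) x0(1) by blast
      have "of_int m2 \<le> hi" unfolding hi_def using x(4) fx d by (simp add: field_simps abs_le_iff)
      moreover have "lo \<le> of_int m2" unfolding lo_def using x(5) fx d by (simp add: field_simps abs_le_iff)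
      ultimately show "m2 \<in> {\<lceil>lo\<rceil> .. \<lfloor>hi\<rfloor>}" by (simp add: le_floor_iff ceiling_le_iff)
    qed
    then have "card (R a) \<le> card {\<lceil>lo\<rceil> .. \<lfloor>hi\<rfloor>}" by (intro card_mono) auto
    also have "\<dots> = nat (\<lfloor>hi\<rfloor> - \<lceil>lo\<rceil> + 1)" by simp
    finally have "real (card (R a)) \<le> real (nat (\<lfloor>hi\<rfloor> - \<lceil>lo\<rceil> + 1))" by simp
    also have "\<dots> \<le> max 0 (hi - lo + 1)"
    proof -
      have "real_of_int (\<lfloor>hi\<rfloor> - \<lceil>lo\<rceil> + 1) \<le> hi - lo + 1" by linarith
      then show ?thesis by (cases "\<lfloor>hi\<rfloor> - \<lceil>lo\<rceil> + 1 \<ge> 0") auto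
    qed
    also have "hi - lo + 1 = 2 * W / d + 2" unfolding hi_def lo_def using d by (simp add: field_simps)
    finally show ?thesis using W d by simp
  qed
  have "card G \<le> card (\<Union>a\<in>I. Pair a ` R a)"
    by (rule card_mono[OF _ sub]) (auto simp: I_def finR)
  also have "\<dots> \<le> (\<Sum>a\<in>I. card (Pair a ` R a))" by (rule card_UN_le) (simp add: I_def)
  also have "\<dots> = (\<Sum>a\<in>I. card (R a))" by (intro sum.cong refl) (simp add: card_image inj_on_def)
  finally have "real (card G) \<le> (\<Sum>a\<in>I. real (card (R a)))" by (simp flip: of_nat_sum)
  also have "\<dots> \<le> (\<Sum>a\<in>I. 2 * W / d + 2)" by (intro sum_mono cR)
  also have "\<dots> = real (card I) * (2 * W / d + 2)" by simp
  also have "real (card I) \<le> pi / d + 3"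
  proof -
    have "card I = nat (\<lceil>pi / d\<rceil> + 2)" unfolding I_def by simp
    moreover have "0 \<le> pi / d" using d by simp
    then have "0 \<le> \<lceil>pi / d\<rceil>" by (simp add: zero_le_ceiling)
    ultimately have "real (card I) = of_int \<lceil>pi / d\<rceil> + 2" by simp
    then show ?thesis by linarith
  qed
  then have "real (card I) * (2 * W / d + 2) \<le> (pi / d + 3) * (2 * W / d + 2)"
    using W d by (intro mult_right_mono) auto
  finally show ?thesis unfolding G_def .
qed


lemma ratio_upper:
  fixes N :: "real \<Rightarrow> real"
  assumes d1: "d1 > 0" and K: "K > 0"
    and b: "\<And>d. 0 < d \<Longrightarrow> d < d1 \<Longrightarrow> 1 \<le> N d \<and> N d \<le> K * d powr (- e)"
    and y: "e < y"
  shows "eventually (\<lambda>d. ln (N d) / ln (1 / d) < y) (at_right 0)"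
proof -
  define eps where "eps = y - e"
  have eps: "eps > 0" using y by (simp add: eps_def)
  define d0 where "d0 = min d1 (min 1 (exp (- \<bar>ln K\<bar> / eps)))"
  have d0: "d0 > 0" unfolding d0_def using d1 by simp
  show ?thesis unfolding eventually_at_right_field
  proof (intro exI[of _ d0] conjI allI impI)
    show "0 < d0" by (rule d0)
    fix d :: real assume d: "0 < d" "d < d0"
    define L where "L = ln (1 / d)"
    have dl: "d < d1" "d < 1" "d < exp (- \<bar>ln K\<bar> / eps)" using d unfolding d0_def by auto
    have L: "L > \<bar>ln K\<bar> / eps"
    proof -
      have "ln d < - \<bar>ln K\<bar> / eps" using dl(3) d(1) by (metis ln_exp ln_less_cancel_iff exp_gt_zero)
      then show ?thesis unfolding L_def using d(1) by (simp add: ln_div)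
    qed
    have Lp: "L > 0" using L eps by (smt (verit) divide_nonneg_pos abs_ge_zero)
    have N: "1 \<le> N d" "N d \<le> K * d powr (- e)" using b[OF d(1) dl(1)] by auto
    have "ln (N d) \<le> ln (K * d powr (- e))" using N K by (subst ln_le_cancel_iff) auto
    also have "\<dots> = ln K + e * L" unfolding L_def using K d(1) by (simp add: ln_mult ln_powr ln_div)
    finally have "ln (N d) / L \<le> (ln K + e * L) / L" using Lp by (simp add: divide_right_mono)
    also have "\<dots> = ln K / L + e" using Lp by (simp add: field_simps)
    also have "ln K / L < eps"
    proof -
      have "\<bar>ln K\<bar> < eps * L" using L eps by (simp add: field_simps)
      then show ?thesis using Lp by (simp add: field_simps abs_less_iff)
    qed
    finally show "ln (N d) / ln (1 / d) < y" unfolding L_def eps_def by simp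
  qed
qed

lemma ratio_lower:
  fixes N :: "real \<Rightarrow> real"
  assumes d1: "d1 > 0" and c: "c > 0"
    and b: "\<And>d. 0 < d \<Longrightarrow> d < d1 \<Longrightarrow> c * d powr (- e) \<le> N d"
    and y: "y < e"
  shows "eventually (\<lambda>d. y < ln (N d) / ln (1 / d)) (at_right 0)"
proof -
  define eps where "eps = e - y"
  have eps: "eps > 0" using y by (simp add: eps_def)
  define d0 where "d0 = min d1 (min 1 (exp (- \<bar>ln c\<bar> / eps)))"
  have d0: "d0 > 0" unfolding d0_def using d1 by simp
  show ?thesis unfolding eventually_at_right_field
  proof (intro exI[of _ d0] conjI allI impI)
    show "0 < d0" by (rule d0)
    fix d :: real assume d: "0 < d" "d < d0"
    define L where "L = ln (1 / d)"
    have dl: "d < d1" "d < 1" "d < exp (- \<bar>ln c\<bar> / eps)" using d unfolding d0_def by auto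
    have L: "L > \<bar>ln c\<bar> / eps"
    proof -
      have "ln d < - \<bar>ln c\<bar> / eps" using dl(3) d(1) by (metis ln_exp ln_less_cancel_iff exp_gt_zero)
      then show ?thesis unfolding L_def using d(1) by (simp add: ln_div)
    qed
    have Lp: "L > 0" using L eps by (smt (verit) divide_nonneg_pos abs_ge_zero)
    have N: "c * d powr (- e) \<le> N d" using b[OF d(1) dl(1)] by auto
    have pos: "c * d powr (- e) > 0" using c d by simp
    have "ln c + e * L = ln (c * d powr (- e))" unfolding L_def using c d(1) by (simp add: ln_mult ln_powr ln_div)
    also have "\<dots> \<le> ln (N d)" using N pos by (subst ln_le_cancel_iff) auto
    finally have "(ln c + e * L) / L \<le> ln (N d) / L" using Lp by (simp add: divide_right_mono)
    moreover have "(ln c + e * L) / L = ln c / L + e" using Lp by (simp add: field_simps)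
    moreover have "- eps < ln c / L"
    proof -
      have "\<bar>ln c\<bar> < eps * L" using L eps by (simp add: field_simps)
      then show ?thesis using Lp by (simp add: field_simps abs_less_iff)
    qed
    ultimately show "y < ln (N d) / ln (1 / d)" unfolding L_def eps_def by simp
  qed
qed


context WS begin

definition GA :: "(real \<times> real) set" where "GA = graph_on {0..pi} (\<lambda>x. Pdens q s x t)"
definition Bp :: real where "Bp = NN^2 * AA^2"

lemma Bp: "\<bar>Pdens q s x t\<bar> \<le> Bp" unfolding Bp_def by (rule P_bound)

lemma finGA: "d > 0 \<Longrightarrow> finite (GS GA d)"
  unfolding GA_def by (rule finite_GS[OF graph_sub]) (use Bp in auto)

lemma cnt_ge1:
  assumes "0 < d" "d < 1"
  shows "1 * d powr (- 1) \<le> real (card (GS GA d))"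
proof -
  have "pi / d - 1 \<le> real (card (GS GA d))" unfolding GA_def
    by (rule LOW1) (use finGA assms in \<open>auto simp: GA_def\<close>)
  moreover have "1 / d \<le> pi / d - 1"
  proof -
    have "1 + d \<le> pi" using assms pi_gt3 by linarith
    then show ?thesis using assms by (simp add: field_simps)
  qed
  ultimately show ?thesis using assms by (simp add: powr_minus divide_inverse)
qed

lemma NN_pos: "NN > 0"
proof -
  have "real q powr (2 * (s - 2)) < 1" using qpos s2 by (intro powr_less_one) auto
  then show ?thesis unfolding NN_def wnorm_def by simp
qed

lemma upper_count:
  assumes a: "0 < a" "a \<le> 1" "a < 2 - s"
  shows "\<exists>K>0. \<forall>d. 0 < d \<longrightarrow> d < 1 \<longrightarrow>
     1 \<le> real (card (GS GA d)) \<and> real (card (GS GA d)) \<le> K * d powr (- (2 - a))"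
proof -
  define Ca where "Ca = NN^2 * 2 * AA * HC a"
  have Ca: "Ca \<ge> 0" unfolding Ca_def using AA_pos HC_nonneg[of a] a by simp
  define K where "K = (pi + 3) * (2 * Ca + 2)"
  have K: "K > 0" unfolding K_def using Ca pi_gt_zero by (simp add: add_pos_nonneg)
  have "1 \<le> real (card (GS GA d)) \<and> real (card (GS GA d)) \<le> K * d powr (- (2 - a))"
    if d: "0 < d" "d < 1" for d
  proof
    show "1 \<le> real (card (GS GA d))"
    proof -
      have "1 \<le> 1 * d powr (- 1)" using d by (simp add: powr_minus field_simps)
      then show ?thesis using cnt_ge1[OF d] by linarith
    qed
    define W where "W = Ca * d powr a"
    have W: "W \<ge> 0" unfolding W_def using Ca by simp
    have hol: "\<bar>Pdens q s x t - Pdens q s y t\<bar> \<le> W" if "\<bar>x - y\<bar> \<le> d" for x y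
    proof -
      have "\<bar>Pdens q s x t - Pdens q s y t\<bar> \<le> Ca * \<bar>x - y\<bar> powr a"
        unfolding Ca_def by (rule P_hoelder[OF a])
      also have "\<dots> \<le> Ca * d powr a" using that a Ca by (intro mult_left_mono powr_mono2) auto
      finally show ?thesis unfolding W_def .
    qed
    have up: "real (card (GS GA d)) \<le> (pi / d + 3) * (2 * W / d + 2)" unfolding GA_def
      by (rule UP[OF _ d(1) _ W]) (use finGA d hol in \<open>auto simp: GA_def\<close>)
    have p1: "d powr (a - 1) \<ge> 1"
    proof -
      have "d powr (1 - a) \<le> 1 powr (1 - a)" using d a by (intro powr_mono2) auto
      then have "d powr (1 - a) \<le> 1" by simp
      moreover have "d powr (a - 1) = inverse (d powr (1 - a))" by (simp add: powr_minus[symmetric])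
      moreover have "d powr (1 - a) > 0" using d by simp
      ultimately show ?thesis by (simp add: one_le_inverse)
    qed
    have e1: "W / d = Ca * d powr (a - 1)" unfolding W_def using d by (simp add: powr_diff)
    have f1: "pi / d + 3 \<le> (pi + 3) / d" using d by (simp add: field_simps)
    have f2: "2 * W / d + 2 \<le> (2 * Ca + 2) * d powr (a - 1)"
    proof -
      have "2 * W / d + 2 = 2 * Ca * d powr (a - 1) + 2" using e1 by simp
      also have "\<dots> \<le> 2 * Ca * d powr (a - 1) + 2 * d powr (a - 1)" using p1 by simp
      finally show ?thesis by (simp add: algebra_simps)
    qed
    have "(pi / d + 3) * (2 * W / d + 2) \<le> ((pi + 3) / d) * ((2 * Ca + 2) * d powr (a - 1))"
      using f1 f2 W d by (intro mult_mono) (auto intro: add_nonneg_nonneg)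
    also have "\<dots> = K * (d powr (a - 1) / d)" unfolding K_def by simp
    also have "d powr (a - 1) / d = d powr (- (2 - a))"
    proof -
      have "d powr (a - 1 - 1) = d powr (a - 1) / d powr 1" by (rule powr_diff)
      moreover have "a - 1 - 1 = - (2 - a)" by simp
      ultimately show ?thesis using d by simp
    qed
    finally show "real (card (GS GA d)) \<le> K * d powr (- (2 - a))" using up by linarith
  qed
  then show ?thesis using K by blast
qed

lemma amp_j: "j \<le> 1 \<Longrightarrow> amp j \<ge> amp 1"
  using rr_bounds by (cases j) (auto simp: amp_eq)

lemma amp_X: "amp M = (real q ^ M) powr (s - 2)"
proof -
  have "real q ^ M = real q powr real M" using qpos by (simp add: powr_realpow)
  then show ?thesis unfolding amp_def using qpos by (simp add: powr_powr)
qed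

lemma lower_count:
  assumes s1: "1 < s"
  shows "\<exists>c>0. \<exists>d1>0. \<forall>d. 0 < d \<longrightarrow> d < d1 \<longrightarrow> c * d powr (- s) \<le> real (card (GS GA d))"
proof -
  obtain c0 where c0: "c0 > 0" "\<And>M. \<exists>j\<le>1. c0 \<le> \<bar>cos (ph M - ph j)\<bar>" using phase by blast
  define C1 where "C1 = NN^2 * pi / 2 * amp 1 * c0"
  have C1: "C1 > 0" unfolding C1_def using NN_pos amp_pos c0 by simp
  have Bp0: "Bp \<ge> 0" unfolding Bp_def by simp
  define T where "T = 4 * pi * Bp / C1 + 1"
  have T0: "4 * pi * Bp / C1 \<ge> 0" using C1 Bp0 by simp
  have T: "T > 0" "4 * pi * Bp \<le> C1 * T"
  proof -
    show "T > 0" unfolding T_def using T0 by linarith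
    have "C1 * T = 4 * pi * Bp + C1" unfolding T_def using C1 by (simp add: field_simps)
    then show "4 * pi * Bp \<le> C1 * T" using C1 by linarith
  qed
  have qr: "real q \<ge> 2" using q2 by simp
  define d1 where "d1 = min (pi / real q ^ 3) (pi / (real q * T powr (1 / (s - 1))))"
  have d1: "d1 > 0" unfolding d1_def using qr T by simp
  define c where "c = C1 / (72 * pi^2) * (pi / real q) powr s"
  have c: "c > 0" unfolding c_def using C1 qr by simp
  have "c * d powr (- s) \<le> real (card (GS GA d))" if d: "0 < d" "d < d1" for d
  proof -
    have dq3: "d < pi / real q ^ 3" and dT: "d < pi / (real q * T powr (1 / (s - 1)))"
      using d unfolding d1_def by auto
    define k0 where "k0 = nat \<lfloor>pi / d\<rfloor>"
    have fl0: "0 \<le> \<lfloor>pi / d\<rfloor>" using d by simp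
    have Rk0: "real k0 = of_int \<lfloor>pi / d\<rfloor>" unfolding k0_def using fl0 by simp
    have pq: "pi / d > real q ^ 3" using dq3 d qr by (simp add: field_simps)
    have "k0 \<ge> 1"
    proof -
      have "real q ^ 3 \<ge> 1" using qr by simp
      then have "pi / d \<ge> 1" using pq by linarith
      then have "\<lfloor>pi / d\<rfloor> \<ge> 1" by (simp only: le_floor_iff)
      then show ?thesis unfolding k0_def by linarith
    qed
    from ex_power_ivl1[OF q2 this] obtain M where M: "q ^ M \<le> k0" "k0 < q ^ (M + 1)" by blast
    define X where "X = real q ^ M"
    have X0: "X > 0" unfolding X_def using qr by simp
    have Xle: "X \<le> pi / d"
    proof -
      have "X \<le> real k0" unfolding X_def using M(1) by (metis of_nat_le_iff of_nat_power)
      then show ?thesis unfolding Rk0 by linarith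
    qed
    have Xgt: "pi / d < real q * X"
    proof -
      have "real k0 + 1 \<le> real (q ^ (M + 1))" using M(2) by linarith
      then have "real k0 + 1 \<le> real q * X" unfolding X_def by simp
      moreover have "pi / d < real k0 + 1" unfolding Rk0 by linarith
      ultimately show ?thesis by linarith
    qed
    have Xgt2: "pi / (real q * d) < X" using Xgt qr d by (simp add: field_simps)
    have M3: "M \<ge> 3"
    proof (rule ccontr)
      assume "\<not> M \<ge> 3"
      then have "M \<le> 2" by simp
      then have "real q ^ M \<le> real q ^ 2" using qr by (intro power_increasing) auto
      then have "real q * X \<le> real q ^ 3" unfolding X_def using qr by (simp add: power3_eq_cube power2_eq_square)
      then show False using Xgt pq by linarith
    qed
    have XT: "X powr (s - 1) \<ge> T"
    proof -
      have "T powr (1 / (s - 1)) < pi / (real q * d)" using dT d qr T by (simp add: field_simps)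
      then have "T powr (1 / (s - 1)) \<le> X" using Xgt2 by linarith
      then have "(T powr (1 / (s - 1))) powr (s - 1) \<le> X powr (s - 1)"
        using s1 T by (intro powr_mono2) auto
      also have "(T powr (1 / (s - 1))) powr (s - 1) = T" using s1 T by (simp add: powr_powr)
      finally show ?thesis .
    qed
    obtain j where j: "j \<le> 1" "c0 \<le> \<bar>cos (ph M - ph j)\<bar>" using c0(2) by blast
    define Kr where "Kr = real (q ^ M + q ^ j)"
    have qj: "real q ^ j \<le> X"
    proof -
      have "real q ^ j \<le> real q ^ M" using qr j M3 by (intro power_increasing) auto
      then show ?thesis unfolding X_def .
    qed
    have Kr: "X \<le> Kr" "Kr \<le> 2 * X" unfolding Kr_def X_def using qj X_def by auto
    define l where "l = 2 * pi / Kr"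
    have l0: "l > 0" unfolding l_def using Kr X0 by simp
    have Kl: "Kr * l = 2 * pi" unfolding l_def using Kr X0 by simp
    have lup: "l \<le> 2 * pi / X" unfolding l_def using Kr X0 by (intro divide_left_mono) auto
    have llow: "pi / X \<le> l" unfolding l_def using Kr X0 by (simp add: field_simps)
    have dl: "d \<le> l"
    proof -
      have "d \<le> pi / X" using Xle X0 d by (simp add: field_simps)
      then show ?thesis using llow by linarith
    qed
    define V where "V = - (NN^2 * pi / 2) * amp j * amp M * cos (ph M - ph j)"
    have FI: "((\<lambda>x. Pdens q s x t * cos (Kr * x)) has_integral V) {0..pi}"
      unfolding Kr_def V_def by (rule P_fourier[OF M3 j(1)])
    have Vlow: "C1 * amp M \<le> \<bar>V\<bar>"
    proof -
      have "\<bar>V\<bar> = NN^2 * pi / 2 * amp j * amp M * \<bar>cos (ph M - ph j)\<bar>"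
        unfolding V_def using amp_pos[of j] amp_pos[of M] by (simp add: abs_mult)
      moreover have "NN^2 * pi / 2 * amp 1 * amp M * c0 \<le> NN^2 * pi / 2 * amp j * amp M * \<bar>cos (ph M - ph j)\<bar>"
        using amp_j[OF j(1)] j(2) amp_pos[of 1] amp_pos[of M] c0(1)
        by (intro mult_mono mult_right_mono mult_left_mono) (auto intro: less_imp_le)
      ultimately show ?thesis unfolding C1_def by (simp add: algebra_simps)
    qed
    have LW: "\<bar>integral {0..pi} (\<lambda>x. Pdens q s x t * cos (Kr * x))\<bar>
       \<le> l^2 * real (card (GS GA l)) + Bp * l"
      unfolding GA_def by (rule LOW[OF P_cont _ l0 Kl]) (use Bp in auto)
    then have LW2: "\<bar>V\<bar> \<le> l^2 * real (card (GS GA l)) + Bp * l" using FI by (simp add: integral_unique)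
    have ampM: "amp M = X powr (s - 2)" unfolding X_def by (rule amp_X)
    have Xs1: "X powr (s - 2) * X = X powr (s - 1)"
    proof -
      have "X powr (s - 2 + 1) = X powr (s - 2) * X powr 1" by (rule powr_add)
      then show ?thesis using X0 by simp
    qed
    have Xs2: "X powr (s - 2) * X^2 = X powr s"
    proof -
      have "X powr (s - 2 + 2) = X powr (s - 2) * X powr 2" by (rule powr_add)
      moreover have "X powr 2 = X^2" using X0 by (simp add: powr_numeral)
      ultimately show ?thesis by simp
    qed
    have Bl: "Bp * l \<le> C1 * amp M / 2"
    proof -
      have "Bp * l \<le> Bp * (2 * pi / X)" using lup Bp0 by (intro mult_left_mono) auto
      also have "\<dots> \<le> C1 * amp M / 2"
      proof -
        have "4 * pi * Bp \<le> C1 * X powr (s - 1)" using T(2) XT C1 by (smt (verit) mult_left_mono)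
        then have "4 * pi * Bp \<le> C1 * (X powr (s - 2) * X)" using Xs1 by simp
        then show ?thesis unfolding ampM using X0 by (simp add: field_simps)
      qed
      finally show ?thesis .
    qed
    have cl: "C1 * amp M / 2 \<le> l^2 * real (card (GS GA l))" using Vlow LW2 Bl by linarith
    have l2: "l^2 \<le> 4 * pi^2 / X^2"
    proof -
      have "l^2 \<le> (2 * pi / X)^2" using lup l0 by (intro power_mono) auto
      then show ?thesis by (simp add: power_divide power_mult_distrib)
    qed
    have cnt_l: "C1 * X powr s / (8 * pi^2) \<le> real (card (GS GA l))"
    proof -
      have "C1 * amp M / 2 \<le> 4 * pi^2 / X^2 * real (card (GS GA l))"
        using cl l2 by (meson mult_right_mono of_nat_0_le_iff order_trans)
      then have "C1 * amp M * X^2 \<le> 8 * pi^2 * real (card (GS GA l))" using X0 by (simp add: field_simps)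
      then have "C1 * X powr s \<le> 8 * pi^2 * real (card (GS GA l))"
        unfolding ampM using Xs2 by (simp add: mult.assoc)
      then show ?thesis by (simp add: field_simps)
    qed
    have cmp: "card (GS GA l) \<le> 9 * card (GS GA d)" by (rule GS_compare[OF finGA[OF d(1)] d(1) dl])
    have "C1 * X powr s / (72 * pi^2) \<le> real (card (GS GA d))"
    proof -
      have h1: "real (card (GS GA l)) \<le> 9 * real (card (GS GA d))" using cmp by linarith
      have "C1 * X powr s \<le> 8 * pi^2 * real (card (GS GA l))" using cnt_l by (simp add: field_simps)
      also have "\<dots> \<le> 8 * pi^2 * (9 * real (card (GS GA d)))" using h1 by (intro mult_left_mono) auto
      finally show ?thesis by (simp add: field_simps)
    qed
    moreover have "c * d powr (- s) \<le> C1 * X powr s / (72 * pi^2)"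
    proof -
      have "(pi / (real q * d)) powr s \<le> X powr s" using Xgt2 s1 d qr by (intro powr_mono2) auto
      moreover have "(pi / (real q * d)) powr s = (pi / real q) powr s * d powr (- s)"
      proof -
        have "(pi / (real q * d)) powr s = pi powr s / ((real q) powr s * d powr s)"
          using d qr by (simp add: powr_divide powr_mult)
        also have "\<dots> = (pi powr s / real q powr s) * inverse (d powr s)" by (simp add: divide_inverse)
        also have "inverse (d powr s) = d powr (- s)" using d by (simp add: powr_minus)
        finally show ?thesis using d qr by (simp add: powr_divide)
      qed
      ultimately have "(pi / real q) powr s * d powr (- s) \<le> X powr s" by simp
      then have "C1 / (72 * pi^2) * ((pi / real q) powr s * d powr (- s)) \<le> C1 / (72 * pi^2) * X powr s"
        using C1 by (intro mult_left_mono) auto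
      then show ?thesis unfolding c_def by (simp add: algebra_simps)
    qed
    ultimately show ?thesis by linarith
  qed
  then show ?thesis using c d1 by blast
qed

definition XX :: "real \<Rightarrow> ereal" where
  "XX d = ereal (ln (real (grid_count GA d)) / ln (1 / d))"

lemma U_bound: "Limsup (at_right 0) XX \<le> ereal (max s 1)"
  unfolding Limsup_le_iff
proof (intro allI impI)
  fix y :: ereal assume y: "y > ereal (max s 1)"
  show "eventually (\<lambda>d. y > XX d) (at_right 0)"
  proof (cases y)
    case (real r)
    then have r: "r > max s 1" using y less_ereal.simps(1) by metis
    define a where "a = (max (2 - r) 0 + min (2 - s) 1) / 2"
    have m: "min (2 - s) 1 > 0" using s2 by simp
    have a: "0 < a" "a \<le> 1" "a < 2 - s" "2 - a < r"
      using r m s2 unfolding a_def by (auto simp: max_def min_def field_simps split: if_splits)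
    obtain K where K: "K > 0" "\<And>d. 0 < d \<Longrightarrow> d < 1 \<Longrightarrow>
        1 \<le> real (card (GS GA d)) \<and> real (card (GS GA d)) \<le> K * d powr (- (2 - a))"
      using upper_count[OF a(1-3)] by blast
    have ev: "eventually (\<lambda>d. ln (real (card (GS GA d))) / ln (1 / d) < r) (at_right 0)"
      by (rule ratio_upper[OF zero_less_one K(1) _ a(4)]) (use K in auto)
    show ?thesis using ev unfolding XX_def gc_eq real by (rule eventually_mono) simp
  next
    case PInf then show ?thesis unfolding XX_def by simp
  next
    case MInf then show ?thesis using y by simp
  qed
qed

lemma L_bound: "ereal (max s 1) \<le> Liminf (at_right 0) XX"
  unfolding le_Liminf_iff
proof (intro allI impI)
  fix y :: ereal assume y: "y < ereal (max s 1)"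
  show "eventually (\<lambda>d. y < XX d) (at_right 0)"
  proof (cases y)
    case (real r)
    then have r: "r < max s 1" using y less_ereal.simps(1) by metis
    have ev: "eventually (\<lambda>d. r < ln (real (card (GS GA d))) / ln (1 / d)) (at_right 0)"
    proof (cases "r < 1")
      case True
      show ?thesis by (rule ratio_lower[OF zero_less_one zero_less_one _ True]) (use cnt_ge1 in auto)
    next
      case False
      then have rs: "r < s" "1 < s" using r by auto
      obtain c d1 where c: "c > 0" "d1 > 0"
        "\<And>d. 0 < d \<Longrightarrow> d < d1 \<Longrightarrow> c * d powr (- s) \<le> real (card (GS GA d))"
        using lower_count[OF rs(2)] by blast
      show ?thesis by (rule ratio_lower[OF c(2) c(1) _ rs(1)]) (use c in auto)
    qed
    show ?thesis using ev unfolding XX_def gc_eq real by (rule eventually_mono) simp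
  next
    case MInf then show ?thesis unfolding XX_def by simp
  next
    case PInf then show ?thesis using y by simp
  qed
qed

lemma box_main: "has_box_dim GA (max s 1)"
proof -
  have LU: "Liminf (at_right 0) XX \<le> Limsup (at_right (0::real)) XX"
    by (rule Liminf_le_Limsup) simp
  have "Liminf (at_right 0) XX = ereal (max s 1)" "Limsup (at_right 0) XX = ereal (max s 1)"
    using U_bound L_bound LU by (meson antisym order_trans)+
  moreover have "XX = (\<lambda>d. ereal (ln (real (grid_count GA d)) / ln (1 / d)))"
    by (rule ext) (simp add: XX_def)
  ultimately show ?thesis unfolding has_box_dim_def upper_box_dim_def lower_box_dim_def by simp
qed

end

theorem theorem1:
  fixes q :: nat and s t :: real
  assumes "q \<ge> 2" and "0 < s" and "s < 2"
  shows "has_box_dim (graph_on {0..pi} (\<lambda>x. Pdens q s x t)) (max s 1)"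
proof -
  interpret W: WS q s t using assms by unfold_locales
  show ?thesis using W.box_main unfolding W.GA_def .
qed


end
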